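(* Let $X$ be a smooth projective complex toric variety, $J$ a subgroup of $\operatorname{AutP}(X)$, and $W$ the preimage of $J$ in $\operatorname{Aut}(\Sigma)$. There exist isomorphisms \[ H^1(W,M)\cong\operatorname{coker}\left(\operatorname{TDiv}(X)^W\to\operatorname{Pic}(X)^J\right)\cong\operatorname{Am}^T(X,J). \]
   Context: Toric setup: $T$ torus, $N$ cocharacter lattice, $M$ character lattice, $\Sigma$ fan with rays $\rho_1,\ldots,\rho_r$; $\operatorname{TDiv}(X)$ is free on the torus-invariant prime divisors $D_{\rho_j}$, with exact sequence $0\to M\to\operatorname{TDiv}(X)\to\operatorname{Pic}(X)\to0$. $\operatorname{Aut}(\Sigma)$ is the group of lattice automorphisms of $N$ preserving $\Sigma$; it acts on $M$ (dually) and on $\operatorname{TDiv}(X)$ (permuting the $D_{\rho_j}$) compatibly with the sequence, hence on $\operatorname{Pic}(X)$, giving a homomorphism $\operatorname{Aut}(\Sigma)\to\operatorname{Aut}(\operatorname{Pic}(X))$ whose image is $\operatorname{AutP}(X)$, the image of $\operatorname{Aut}(X)\to\operatorname{Aut}(\operatorname{Pic}(X))$, $g\mapsto(g^\ast)^{-1}$; $W$ is the preimage of $J$ under this homomorphism. Let $[D_1],\ldots,[D_s]$ be the distinct linear equivalence classes of the $D_{\rho_j}$ and $n_i$ the number of rays with divisor in class $[D_i]$. For $[D]\in\operatorname{Pic}(X)$, $\langle D\rangle_J:=\sum_{[E]\in J\cdot[D]}[E]$. $\operatorname{Pic}^T(X,J):=\langle n_i\langle D_i\rangle_J\mid1\le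 i\le s\rangle$ and $\operatorname{Am}^T(X,J):=\operatorname{Pic}(X)^J/\operatorname{Pic}^T(X,J)$. *)

theory Defs
  imports "HOL-Analysis.Finite_Cartesian_Product" "HOL-Algebra.Algebra"
begin

text \<open>The cocharacter lattice is N = int^'n (n = CARD('n)).
  A fan is encoded (it is smooth, hence simplicial) as the set of its cones, each cone
  given by the finite set of primitive generators of its rays. The character lattice
  M = Hom(N, Z) is the set of additive maps N \<Rightarrow> int.\<close>

type_synonym 'n lat = "int ^ 'n"

definition additive_map :: "('a::plus \<Rightarrow> 'b::plus) \<Rightarrow> bool" where
  "additive_map f \<longleftrightarrow> (\<forall>x y. f (x + y) = f x + f y)"

definition charlat :: "(('n::finite) lat \<Rightarrow> int) set" where
  "charlat = {m. additive_map m}"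

definition in_cone :: "('n::finite) lat set \<Rightarrow> real ^ 'n \<Rightarrow> bool" where
  "in_cone \<sigma> x \<longleftrightarrow> (\<exists>a. (\<forall>v\<in>\<sigma>. a v \<ge> 0) \<and>
      (\<forall>i. x $ i = (\<Sum>v\<in>\<sigma>. a v * real_of_int (v $ i))))"

definition zbasis :: "('n::finite) lat set \<Rightarrow> bool" where
  "zbasis B \<longleftrightarrow> finite B \<and> (\<forall>x. \<exists>!c. (\<forall>v. v \<notin> B \<longrightarrow> c v = 0) \<and>
      (\<forall>i. x $ i = (\<Sum>v\<in>B. c v * v $ i)))"

definition rays :: "('n::finite) lat set set \<Rightarrow> ('n::finite) lat set" where
  "rays \<Sigma> = \<Union>\<Sigma>"

definition max_cone :: "('n::finite) lat set set \<Rightarrow> ('n::finite) lat set \<Rightarrow> bool" where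
  "max_cone \<Sigma> \<sigma> \<longleftrightarrow> \<sigma> \<in> \<Sigma> \<and> (\<forall>\<tau>\<in>\<Sigma>. \<sigma> \<subseteq> \<tau> \<longrightarrow> \<tau> = \<sigma>)"

definition smooth_fan :: "('n::finite) lat set set \<Rightarrow> bool" where
  "smooth_fan \<Sigma> \<longleftrightarrow> finite \<Sigma> \<and> \<Sigma> \<noteq> {} \<and>
     (\<forall>\<sigma>\<in>\<Sigma>. \<forall>\<tau>. \<tau> \<subseteq> \<sigma> \<longrightarrow> \<tau> \<in> \<Sigma>) \<and>
     (\<forall>\<sigma>\<in>\<Sigma>. \<forall>\<tau>\<in>\<Sigma>. \<forall>x. in_cone \<sigma> x \<and> in_cone \<tau> x \<longrightarrow> in_cone (\<sigma> \<inter> \<tau>) x) \<and>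
     (\<forall>\<sigma>\<in>\<Sigma>. \<exists>B. zbasis B \<and> \<sigma> \<subseteq> B)"

definition complete_fan :: "('n::finite) lat set set \<Rightarrow> bool" where
  "complete_fan \<Sigma> \<longleftrightarrow> (\<forall>x. \<exists>\<sigma>\<in>\<Sigma>. in_cone \<sigma> x)"

text \<open>Projective: there is a strictly convex support function (an ample divisor):
  for every maximal cone \<sigma> some m_\<sigma> in M agrees with a on the rays of \<sigma> and is strictly
  larger than a on all other rays.\<close>
definition projective_fan :: "('n::finite) lat set set \<Rightarrow> bool" where
  "projective_fan \<Sigma> \<longleftrightarrow> (\<exists>a :: ('n::finite) lat \<Rightarrow> int. \<forall>\<sigma>. max_cone \<Sigma> \<sigma> \<longrightarrow>
      (\<exists>m\<in>charlat. (\<forall>v\<in>\<sigma>. m v = a v) \<and> (\<forall>v\<in>rays \<Sigma> - \<sigma>. m v > a v)))"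

definition smooth_projective_toric :: "('n::finite) lat set set \<Rightarrow> bool" where
  "smooth_projective_toric \<Sigma> \<longleftrightarrow> smooth_fan \<Sigma> \<and> complete_fan \<Sigma> \<and> projective_fan \<Sigma>"

definition TDiv :: "('n::finite) lat set set \<Rightarrow> (('n::finite) lat \<Rightarrow> int) monoid" where
  "TDiv \<Sigma> = \<lparr>carrier = {D. \<forall>v. v \<notin> rays \<Sigma> \<longrightarrow> D v = 0},
              monoid.mult = (\<lambda>D E. \<lambda>v. D v + E v), monoid.one = (\<lambda>v. 0)\<rparr>"

text \<open>Principal divisors: image of M \<rightarrow> TDiv(X), m \<mapsto> div(\<chi>^m) = \<Sum> <m,u_\<rho>> D_\<rho>.\<close>
definition divm :: "('n::finite) lat set set \<Rightarrow> (('n::finite) lat \<Rightarrow> int) \<Rightarrow> (('n::finite) lat \<Rightarrow> int)" where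
  "divm \<Sigma> m = (\<lambda>v. if v \<in> rays \<Sigma> then m v else 0)"

definition Princ :: "('n::finite) lat set set \<Rightarrow> (('n::finite) lat \<Rightarrow> int) set" where
  "Princ \<Sigma> = divm \<Sigma> ` charlat"

definition Pic :: "('n::finite) lat set set \<Rightarrow> (('n::finite) lat \<Rightarrow> int) set monoid" where
  "Pic \<Sigma> = TDiv \<Sigma> Mod Princ \<Sigma>"

definition cls :: "('n::finite) lat set set \<Rightarrow> (('n::finite) lat \<Rightarrow> int) \<Rightarrow> (('n::finite) lat \<Rightarrow> int) set" where
  "cls \<Sigma> D = Princ \<Sigma> #>\<^bsub>TDiv \<Sigma>\<^esub> D"

definition AutSigma :: "('n::finite) lat set set \<Rightarrow> (('n::finite) lat \<Rightarrow> ('n::finite) lat) set" where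
  "AutSigma \<Sigma> = {g. bij g \<and> additive_map g \<and> (\<lambda>\<sigma>. g ` \<sigma>) ` \<Sigma> = \<Sigma>}"

text \<open>Induced actions: on M and on TDiv both by precomposition with g^{-1}
  (so g sends D_\<rho> to D_{g \<rho>}); on Pic(X) on classes.\<close>
definition act :: "(('n::finite) lat \<Rightarrow> ('n::finite) lat) \<Rightarrow> (('n::finite) lat \<Rightarrow> int) \<Rightarrow> (('n::finite) lat \<Rightarrow> int)" where
  "act g D = D \<circ> Hilbert_Choice.inv g"

definition picact :: "('n::finite) lat set set \<Rightarrow> (('n::finite) lat \<Rightarrow> ('n::finite) lat)
    \<Rightarrow> (('n::finite) lat \<Rightarrow> int) set \<Rightarrow> (('n::finite) lat \<Rightarrow> int) set" where
  "picact \<Sigma> g = (\<lambda>C \<in> carrier (Pic \<Sigma>). act g ` C)"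

text \<open>AutP(X) as the image of Aut(\<Sigma>) \<rightarrow> Aut(Pic(X)) (as stated in the context).\<close>
definition AutP :: "('n::finite) lat set set \<Rightarrow> ((('n::finite) lat \<Rightarrow> int) set \<Rightarrow> (('n::finite) lat \<Rightarrow> int) set) set" where
  "AutP \<Sigma> = picact \<Sigma> ` AutSigma \<Sigma>"

definition Wgrp :: "('n::finite) lat set set \<Rightarrow> ((('n::finite) lat \<Rightarrow> int) set \<Rightarrow> (('n::finite) lat \<Rightarrow> int) set) set
    \<Rightarrow> (('n::finite) lat \<Rightarrow> ('n::finite) lat) set" where
  "Wgrp \<Sigma> J = {g \<in> AutSigma \<Sigma>. picact \<Sigma> g \<in> J}"

definition Z1 :: "(('n::finite) lat \<Rightarrow> ('n::finite) lat) set \<Rightarrow> ((('n::finite) lat \<Rightarrow> ('n::finite) lat) \<Rightarrow> (('n::finite) lat \<Rightarrow> int)) set" where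
  "Z1 W = {f \<in> W \<rightarrow>\<^sub>E charlat. \<forall>g\<in>W. \<forall>h\<in>W. f (g \<circ> h) = (\<lambda>v. f g v + act g (f h) v)}"

definition B1 :: "(('n::finite) lat \<Rightarrow> ('n::finite) lat) set \<Rightarrow> ((('n::finite) lat \<Rightarrow> ('n::finite) lat) \<Rightarrow> (('n::finite) lat \<Rightarrow> int)) set" where
  "B1 W = {(\<lambda>g\<in>W. \<lambda>v. act g m v - m v) | m. m \<in> charlat}"

definition Z1grp :: "(('n::finite) lat \<Rightarrow> ('n::finite) lat) set \<Rightarrow> ((('n::finite) lat \<Rightarrow> ('n::finite) lat) \<Rightarrow> (('n::finite) lat \<Rightarrow> int)) monoid" where
  "Z1grp W = \<lparr>carrier = Z1 W, monoid.mult = (\<lambda>f f'. \<lambda>g\<in>W. \<lambda>v. f g v + f' g v), monoid.one = (\<lambda>g\<in>W. \<lambda>v. 0)\<rparr>"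

definition H1 :: "(('n::finite) lat \<Rightarrow> ('n::finite) lat) set \<Rightarrow> ((('n::finite) lat \<Rightarrow> ('n::finite) lat) \<Rightarrow> (('n::finite) lat \<Rightarrow> int)) set monoid" where
  "H1 W = Z1grp W Mod B1 W"

definition PicInv :: "('n::finite) lat set set \<Rightarrow> ((('n::finite) lat \<Rightarrow> int) set \<Rightarrow> (('n::finite) lat \<Rightarrow> int) set) set
    \<Rightarrow> (('n::finite) lat \<Rightarrow> int) set set" where
  "PicInv \<Sigma> J = {C \<in> carrier (Pic \<Sigma>). \<forall>j\<in>J. j C = C}"

definition TDivInv :: "('n::finite) lat set set \<Rightarrow> (('n::finite) lat \<Rightarrow> ('n::finite) lat) set \<Rightarrow> (('n::finite) lat \<Rightarrow> int) set" where
  "TDivInv \<Sigma> W = {D \<in> carrier (TDiv \<Sigma>). \<forall>g\<in>W. act g D = D}"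

definition PicInvGrp :: "('n::finite) lat set set \<Rightarrow> ((('n::finite) lat \<Rightarrow> int) set \<Rightarrow> (('n::finite) lat \<Rightarrow> int) set) set
    \<Rightarrow> (('n::finite) lat \<Rightarrow> int) set monoid" where
  "PicInvGrp \<Sigma> J = Pic \<Sigma> \<lparr>carrier := PicInv \<Sigma> J\<rparr>"

definition Coker :: "('n::finite) lat set set \<Rightarrow> ((('n::finite) lat \<Rightarrow> int) set \<Rightarrow> (('n::finite) lat \<Rightarrow> int) set) set
    \<Rightarrow> (('n::finite) lat \<Rightarrow> int) set set monoid" where
  "Coker \<Sigma> J = PicInvGrp \<Sigma> J Mod (cls \<Sigma> ` TDivInv \<Sigma> (Wgrp \<Sigma> J))"

definition prime_div :: "('n::finite) lat \<Rightarrow> (('n::finite) lat \<Rightarrow> int)" where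
  "prime_div \<rho> = (\<lambda>v. if v = \<rho> then 1 else 0)"

definition ray_classes :: "('n::finite) lat set set \<Rightarrow> (('n::finite) lat \<Rightarrow> int) set set" where
  "ray_classes \<Sigma> = (\<lambda>\<rho>. cls \<Sigma> (prime_div \<rho>)) ` rays \<Sigma>"

definition mult_cls :: "('n::finite) lat set set \<Rightarrow> (('n::finite) lat \<Rightarrow> int) set \<Rightarrow> nat" where
  "mult_cls \<Sigma> c = card {\<rho> \<in> rays \<Sigma>. cls \<Sigma> (prime_div \<rho>) = c}"

definition orbit_sum :: "('n::finite) lat set set \<Rightarrow> ((('n::finite) lat \<Rightarrow> int) set \<Rightarrow> (('n::finite) lat \<Rightarrow> int) set) set
    \<Rightarrow> (('n::finite) lat \<Rightarrow> int) set \<Rightarrow> (('n::finite) lat \<Rightarrow> int) set" where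
  "orbit_sum \<Sigma> J c = finprod (Pic \<Sigma>) id {j c | j. j \<in> J}"

definition PicT :: "('n::finite) lat set set \<Rightarrow> ((('n::finite) lat \<Rightarrow> int) set \<Rightarrow> (('n::finite) lat \<Rightarrow> int) set) set
    \<Rightarrow> (('n::finite) lat \<Rightarrow> int) set set" where
  "PicT \<Sigma> J = generate (Pic \<Sigma>)
      {orbit_sum \<Sigma> J c [^]\<^bsub>Pic \<Sigma>\<^esub> mult_cls \<Sigma> c | c. c \<in> ray_classes \<Sigma>}"

definition AmT :: "('n::finite) lat set set \<Rightarrow> ((('n::finite) lat \<Rightarrow> int) set \<Rightarrow> (('n::finite) lat \<Rightarrow> int) set) set
    \<Rightarrow> (('n::finite) lat \<Rightarrow> int) set set monoid" where
  "AmT \<Sigma> J = PicInvGrp \<Sigma> J Mod PicT \<Sigma> J"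

end

theory Submission imports Defs begin

abbreviation hinv :: "('a \<Rightarrow> 'b) \<Rightarrow> 'b \<Rightarrow> 'a" where "hinv \<equiv> Hilbert_Choice.inv"

section \<open>Additive maps\<close>

lemma additive_add:
  assumes "additive_map f" shows "f (x + y) = f x + f y"
  using assms unfolding additive_map_def by simp

lemma additive_0:
  fixes f :: "'a::group_add \<Rightarrow> 'b::group_add"
  assumes "additive_map f" shows "f 0 = 0"
proof -
  have "f 0 + f 0 = 0 + f 0" using additive_add[OF assms, of 0 0] by simp
  then show ?thesis by (rule add_right_imp_eq)
qed

lemma additive_uminus:
  fixes f :: "'a::ab_group_add \<Rightarrow> 'b::ab_group_add"
  assumes "additive_map f" shows "f (- x) = - f x"
proof -
  have "f (x + - x) = f x + f (- x)" by (rule additive_add[OF assms])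
  then have "f x + f (- x) = 0" using additive_0[OF assms] by simp
  then show ?thesis by (simp add: add_eq_0_iff2)
qed


lemma additive_diff:
  fixes f :: "'a::ab_group_add \<Rightarrow> 'b::ab_group_add"
  assumes "additive_map f" shows "f (x - y) = f x - f y"
  using additive_add[OF assms, of x "- y"] additive_uminus[OF assms, of y] by simp

lemma additive_sum:
  fixes f :: "'a::ab_group_add \<Rightarrow> 'b::ab_group_add"
  assumes "additive_map f" shows "f (\<Sum>i\<in>S. g i) = (\<Sum>i\<in>S. f (g i))"
proof (induction S rule: infinite_finite_induct)
  case (infinite A) then show ?case using additive_0[OF assms] by simp
next
  case empty then show ?case using additive_0[OF assms] by simp
next
  case (insert x F)
  have "f (\<Sum>i\<in>insert x F. g i) = f (g x + (\<Sum>i\<in>F. g i))" using insert.hyps by simp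
  also have "\<dots> = f (g x) + f (\<Sum>i\<in>F. g i)" by (rule additive_add[OF assms])
  also have "\<dots> = (\<Sum>i\<in>insert x F. f (g i))" using insert.hyps insert.IH by simp
  finally show ?case .
qed

lemma additive_nat_mult:
  fixes f :: "int ^ 'n::finite \<Rightarrow> int"
  assumes "additive_map f" shows "f (int k *s x) = int k * f x"
proof (induction k)
  case 0 then show ?case using additive_0[OF assms] by (simp add: vector_scalar_mult_def zero_vec_def[symmetric])
next
  case (Suc k)
  have "int (Suc k) *s x = x + int k *s x" by (simp add: vec_eq_iff algebra_simps)
  then show ?case using Suc additive_add[OF assms] by (simp add: algebra_simps)
qed

lemma additive_mult:
  fixes f :: "int ^ 'n::finite \<Rightarrow> int"
  assumes "additive_map f" shows "f (k *s x) = k * f x"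
proof (cases "k \<ge> 0")
  case True
  then obtain n where "k = int n" by (metis nonneg_eq_int)
  then show ?thesis using additive_nat_mult[OF assms] by simp
next
  case False
  then obtain n where n: "k = - int n" by (metis neg_int_cases less_le not_le)
  have "k *s x = - (int n *s x)" using n by (simp add: vec_eq_iff)
  then have "f (k *s x) = - (int n * f x)"
    by (simp add: additive_uminus[OF assms] additive_nat_mult[OF assms])
  moreover have "k * f x = - (int n * f x)" using n by (simp only: mult_minus_left)
  ultimately show ?thesis by (simp only:)
qed

definition ev :: "'n::finite \<Rightarrow> int ^ 'n" where "ev i = axis i 1"

lemma additive_lin:
  fixes f :: "int ^ 'n::finite \<Rightarrow> int"
  assumes "additive_map f" shows "f x = (\<Sum>i\<in>UNIV. x $ i * f (ev i))"
proof -
  have "f x = f (\<Sum>i\<in>UNIV. (x$i) *s axis i 1)" by (simp only: basis_expansion)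
  also have "\<dots> = (\<Sum>i\<in>UNIV. x $ i * f (ev i))"
    unfolding additive_sum[OF assms] additive_mult[OF assms] ev_def ..
  finally show ?thesis .
qed



definition lin_ext :: "(int ^ 'n::finite \<Rightarrow> int) \<Rightarrow> real ^ 'n \<Rightarrow> real" where
  "lin_ext f y = (\<Sum>i\<in>UNIV. y $ i * real_of_int (f (ev i)))"

lemma lin_ext_comb:
  fixes f :: "int ^ 'n::finite \<Rightarrow> int"
  assumes "additive_map f" and "finite S" and "\<forall>i. y $ i = (\<Sum>v\<in>S. a v * real_of_int (v $ i))"
  shows "lin_ext f y = (\<Sum>v\<in>S. a v * real_of_int (f v))"
proof -
  have "lin_ext f y = (\<Sum>i\<in>UNIV. \<Sum>v\<in>S. a v * real_of_int (v $ i) * real_of_int (f (ev i)))"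
    unfolding lin_ext_def using assms(3) by (simp add: sum_distrib_right)
  also have "\<dots> = (\<Sum>v\<in>S. \<Sum>i\<in>UNIV. a v * (real_of_int (v $ i) * real_of_int (f (ev i))))"
    by (subst sum.swap) (simp add: mult.assoc)
  also have "\<dots> = (\<Sum>v\<in>S. a v * real_of_int (f v))"
  proof (rule sum.cong[OF refl])
    fix v
    have "real_of_int (f v) = (\<Sum>i\<in>UNIV. real_of_int (v $ i) * real_of_int (f (ev i)))"
      by (subst additive_lin[OF assms(1)]) simp
    then show "(\<Sum>i\<in>UNIV. a v * (real_of_int (v $ i) * real_of_int (f (ev i)))) = a v * real_of_int (f v)"
      by (simp add: sum_distrib_left)
  qed
  finally show ?thesis .
qed

lemma additive_comp:
  assumes "additive_map g" "additive_map h" shows "additive_map (g \<circ> h)"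
  using assms by (simp add: additive_map_def)

lemma additive_funpow:
  fixes g :: "'a::plus \<Rightarrow> 'a"
  assumes "additive_map g" shows "additive_map (g ^^ k)"
proof (induction k)
  case 0 show ?case by (simp add: additive_map_def)
next
  case (Suc k) show ?case unfolding funpow.simps(2) by (rule additive_comp[OF assms Suc.IH])
qed

lemma additive_inv:
  fixes g :: "'a::ab_group_add \<Rightarrow> 'a"
  assumes "additive_map g" "bij g" shows "additive_map (hinv g)"
  unfolding additive_map_def
proof (intro allI)
  fix x y
  have "g (hinv g x + hinv g y) = x + y"
    using additive_add[OF assms(1)] assms(2) by (simp add: bij_is_surj surj_f_inv_f)
  then show "hinv g (x + y) = hinv g x + hinv g y"
    using assms(2) by (metis bij_inv_eq_iff)
qed

section \<open>Z-bases\<close>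

definition zcoord :: "(int ^ 'n::finite) set \<Rightarrow> int ^ 'n \<Rightarrow> int ^ 'n \<Rightarrow> int" where
  "zcoord B x = (THE c. (\<forall>v. v \<notin> B \<longrightarrow> c v = 0) \<and> (\<forall>i. x $ i = (\<Sum>v\<in>B. c v * v $ i)))"

lemma zcoord_prop:
  assumes "zbasis B"
  shows "(\<forall>v. v \<notin> B \<longrightarrow> zcoord B x v = 0) \<and> (\<forall>i. x $ i = (\<Sum>v\<in>B. zcoord B x v * v $ i))"
proof -
  have "\<exists>!c. (\<forall>v. v \<notin> B \<longrightarrow> c v = 0) \<and> (\<forall>i. x $ i = (\<Sum>v\<in>B. c v * v $ i))"
    using assms unfolding zbasis_def by simp
  then show ?thesis unfolding zcoord_def by (rule theI')
qed

lemma zcoord_unique: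
  assumes "zbasis B" "\<forall>v. v \<notin> B \<longrightarrow> c v = 0" "\<forall>i. x $ i = (\<Sum>v\<in>B. c v * v $ i)"
  shows "zcoord B x = c"
proof -
  have ex: "\<exists>!c. (\<forall>v. v \<notin> B \<longrightarrow> c v = 0) \<and> (\<forall>i. x $ i = (\<Sum>v\<in>B. c v * v $ i))"
    using assms(1) unfolding zbasis_def by blast
  show ?thesis unfolding zcoord_def by (rule the1_equality[OF ex]) (simp add: assms(2,3))
qed

lemma zcoord_additive:
  assumes "zbasis B" shows "additive_map (\<lambda>x. zcoord B x w)"
  unfolding additive_map_def
proof (intro allI)
  fix x y
  let ?c = "\<lambda>v. zcoord B x v + zcoord B y v"
  have "\<forall>v. v \<notin> B \<longrightarrow> ?c v = 0" using zcoord_prop[OF assms, of x] zcoord_prop[OF assms, of y] by simp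
  moreover have "\<forall>i. (x + y) $ i = (\<Sum>v\<in>B. ?c v * v $ i)"
  proof
    fix i
    have "x $ i = (\<Sum>v\<in>B. zcoord B x v * v $ i)" using zcoord_prop[OF assms, of x] by simp
    moreover have "y $ i = (\<Sum>v\<in>B. zcoord B y v * v $ i)" using zcoord_prop[OF assms, of y] by simp
    ultimately show "(x + y) $ i = (\<Sum>v\<in>B. ?c v * v $ i)"
      by (simp add: distrib_right sum.distrib)
  qed
  ultimately have "zcoord B (x + y) = ?c" by (rule zcoord_unique[OF assms])
  then show "zcoord B (x + y) w = zcoord B x w + zcoord B y w" by simp
qed

lemma zcoord_basis:
  assumes "zbasis B" "v \<in> B" shows "zcoord B v w = (if w = v then 1 else 0)"
proof -
  have fin: "finite B" using assms(1) unfolding zbasis_def by simp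
  have "zcoord B v = (\<lambda>u. if u = v then 1 else 0)"
  proof (rule zcoord_unique[OF assms(1)])
    show "\<forall>u. u \<notin> B \<longrightarrow> (if u = v then 1 else 0) = (0::int)" using assms(2) by auto
    show "\<forall>i. v $ i = (\<Sum>u\<in>B. (if u = v then 1 else 0) * u $ i)"
    proof
      fix i
      have "(\<Sum>u\<in>B. (if u = v then 1 else 0) * u $ i) = (\<Sum>u\<in>B. (if u = v then v $ i else 0))"
        by (intro sum.cong) auto
      also have "\<dots> = v $ i" using fin assms(2) by (simp add: sum.delta')
      finally show "v $ i = (\<Sum>u\<in>B. (if u = v then 1 else 0) * u $ i)" by simp
    qed
  qed
  then show ?thesis by simp
qed

locale toric =
  fixes S :: "(int ^ 'n::finite) set set"
  assumes spt: "smooth_projective_toric S"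
begin

lemma sfan: "smooth_fan S" and cfan: "complete_fan S"
  using spt by (simp_all add: smooth_projective_toric_def)

lemma faces: "\<sigma> \<in> S \<Longrightarrow> \<tau> \<subseteq> \<sigma> \<Longrightarrow> \<tau> \<in> S"
  using sfan unfolding smooth_fan_def by blast

lemma fanint: "\<sigma> \<in> S \<Longrightarrow> \<tau> \<in> S \<Longrightarrow> in_cone \<sigma> x \<Longrightarrow> in_cone \<tau> x \<Longrightarrow> in_cone (\<sigma> \<inter> \<tau>) x"
  using sfan unfolding smooth_fan_def by blast

lemma zb: "\<sigma> \<in> S \<Longrightarrow> \<exists>B. zbasis B \<and> \<sigma> \<subseteq> B"
  using sfan unfolding smooth_fan_def by blast

lemma finite_S: "finite S"
  using sfan unfolding smooth_fan_def by blast

lemma cone_finite: "\<sigma> \<in> S \<Longrightarrow> finite \<sigma>"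
  using zb unfolding zbasis_def by (meson finite_subset)

lemma finite_rays: "finite (rays S)"
  unfolding rays_def using finite_S cone_finite by blast

lemma cone_rays: "\<sigma> \<in> S \<Longrightarrow> \<sigma> \<subseteq> rays S"
  unfolding rays_def by blast

lemma complete: "\<exists>\<sigma>\<in>S. in_cone \<sigma> x"
  using cfan unfolding complete_fan_def by blast

lemma cone_indep:
  assumes "\<sigma> \<in> S" "\<forall>i. (\<Sum>v\<in>\<sigma>. a v * real_of_int (v $ i)) = (\<Sum>v\<in>\<sigma>. b v * real_of_int (v $ i))"
    and "w \<in> \<sigma>"
  shows "a w = b w"
proof -
  obtain B where B: "zbasis B" "\<sigma> \<subseteq> B" using zb[OF assms(1)] by blast
  have fin: "finite \<sigma>" using cone_finite[OF assms(1)] .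
  let ?f = "\<lambda>x. zcoord B x w"
  have add: "additive_map ?f" by (rule zcoord_additive[OF B(1)])
  define y :: "real ^ 'n" where "y = (\<chi> i. (\<Sum>v\<in>\<sigma>. a v * real_of_int (v $ i)))"
  have ya: "\<forall>i. y $ i = (\<Sum>v\<in>\<sigma>. a v * real_of_int (v $ i))" unfolding y_def by simp
  have yb: "\<forall>i. y $ i = (\<Sum>v\<in>\<sigma>. b v * real_of_int (v $ i))" using ya assms(2) by simp
  have fv: "\<And>v. v \<in> \<sigma> \<Longrightarrow> real_of_int (?f v) = (if v = w then 1 else 0)"
    using zcoord_basis[OF B(1)] B(2) by auto
  have "lin_ext ?f y = (\<Sum>v\<in>\<sigma>. a v * real_of_int (?f v))" by (rule lin_ext_comb[OF add fin ya])
  also have "\<dots> = (\<Sum>v\<in>\<sigma>. a v * (if v = w then 1 else 0))" using fv by (intro sum.cong) simp_all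
  also have "\<dots> = a w" using fin assms(3) by (simp add: if_distrib sum.delta' cong: if_cong)
  finally have 1: "lin_ext ?f y = a w" .
  have "lin_ext ?f y = (\<Sum>v\<in>\<sigma>. b v * real_of_int (?f v))" by (rule lin_ext_comb[OF add fin yb])
  also have "\<dots> = (\<Sum>v\<in>\<sigma>. b v * (if v = w then 1 else 0))" using fv by (intro sum.cong) simp_all
  also have "\<dots> = b w" using fin assms(3) by (simp add: if_distrib sum.delta' cong: if_cong)
  finally show ?thesis using 1 by simp
qed

lemma span_zero:
  fixes f :: "int ^ 'n \<Rightarrow> int"
  assumes "additive_map f" "\<forall>v\<in>rays S. f v = 0"
  shows "f x = 0"
proof -
  define y :: "real ^ 'n" where "y = (\<chi> i. real_of_int (x $ i))"
  obtain \<sigma> where s: "\<sigma> \<in> S" "in_cone \<sigma> y" using complete by blast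
  then obtain a where a: "\<forall>i. y $ i = (\<Sum>v\<in>\<sigma>. a v * real_of_int (v $ i))"
    unfolding in_cone_def by blast
  have "lin_ext f y = (\<Sum>v\<in>\<sigma>. a v * real_of_int (f v))"
    by (rule lin_ext_comb[OF assms(1) cone_finite[OF s(1)] a])
  also have "\<dots> = 0" using assms(2) cone_rays[OF s(1)] by (intro sum.neutral) auto
  finally have 0: "lin_ext f y = 0" .
  have "real_of_int (f x) = (\<Sum>i\<in>UNIV. real_of_int (x $ i) * real_of_int (f (ev i)))"
    by (subst additive_lin[OF assms(1)]) simp
  also have "\<dots> = lin_ext f y" unfolding lin_ext_def y_def by simp
  finally show ?thesis using 0 by simp
qed

lemma span_eq:
  fixes f g :: "int ^ 'n \<Rightarrow> int"
  assumes "additive_map f" "additive_map g" "\<forall>v\<in>rays S. f v = g v"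
  shows "f = g"
proof
  fix x
  have "additive_map (\<lambda>x. f x - g x)" using assms(1,2) by (simp add: additive_map_def)
  moreover have "\<forall>v\<in>rays S. f v - g v = 0" using assms(3) by simp
  ultimately have "f x - g x = 0" by (rule span_zero[where f = "\<lambda>x. f x - g x"])
  then show "f x = g x" by simp
qed


section \<open>Divisor groups\<close>

lemma TDiv_carrier: "D \<in> carrier (TDiv S) \<longleftrightarrow> (\<forall>v. v \<notin> rays S \<longrightarrow> D v = 0)"
  by (simp add: TDiv_def)

lemma TDiv_mult: "D \<otimes>\<^bsub>TDiv S\<^esub> E = (\<lambda>v. D v + E v)"
  by (simp add: TDiv_def)

lemma TDiv_one: "\<one>\<^bsub>TDiv S\<^esub> = (\<lambda>v. 0)"
  by (simp add: TDiv_def)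

lemma TDiv_cg: "comm_group (TDiv S)"
proof (rule comm_groupI)
  fix x assume x: "x \<in> carrier (TDiv S)"
  show "\<exists>y\<in>carrier (TDiv S). y \<otimes>\<^bsub>TDiv S\<^esub> x = \<one>\<^bsub>TDiv S\<^esub>"
  proof
    show "(\<lambda>v. - x v) \<otimes>\<^bsub>TDiv S\<^esub> x = \<one>\<^bsub>TDiv S\<^esub>" by (simp add: TDiv_def)
    show "(\<lambda>v. - x v) \<in> carrier (TDiv S)" using x by (simp add: TDiv_def)
  qed
qed (simp_all add: TDiv_def add_ac)

interpretation TD: comm_group "TDiv S" by (rule TDiv_cg)

lemma TDiv_inv: "D \<in> carrier (TDiv S) \<Longrightarrow> inv\<^bsub>TDiv S\<^esub> D = (\<lambda>v. - D v)"
  by (rule TD.inv_equality) (simp_all add: TDiv_def)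

lemma charlat_iff: "m \<in> charlat \<longleftrightarrow> additive_map m"
  by (simp add: charlat_def)

lemma charlat_add: "m1 \<in> charlat \<Longrightarrow> m2 \<in> charlat \<Longrightarrow> (\<lambda>x. m1 x + m2 x) \<in> charlat"
  by (simp add: charlat_def additive_map_def)

lemma charlat_smult: "m \<in> charlat \<Longrightarrow> (\<lambda>x. k * m x) \<in> charlat"
  by (simp add: charlat_def additive_map_def distrib_left)

lemma charlat_neg: "m \<in> charlat \<Longrightarrow> (\<lambda>x. - m x) \<in> charlat"
  by (simp add: charlat_def additive_map_def)

lemma charlat_diff: "m1 \<in> charlat \<Longrightarrow> m2 \<in> charlat \<Longrightarrow> (\<lambda>x. m1 x - m2 x) \<in> charlat"
  by (simp add: charlat_def additive_map_def)

lemma charlat_zero: "(\<lambda>x. 0) \<in> charlat"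
  by (simp add: charlat_def additive_map_def)

lemma divm_carrier: "divm S m \<in> carrier (TDiv S)"
  by (simp add: TDiv_def divm_def)

lemma divm_add: "divm S (\<lambda>x. m1 x + m2 x) = (\<lambda>v. divm S m1 v + divm S m2 v)"
  by (simp add: divm_def fun_eq_iff)

lemma divm_diff: "divm S (\<lambda>x. m1 x - m2 x) = (\<lambda>v. divm S m1 v - divm S m2 v)"
  by (simp add: divm_def fun_eq_iff)

lemma divm_neg: "divm S (\<lambda>x. - m x) = (\<lambda>v. - divm S m v)"
  by (simp add: divm_def fun_eq_iff)

lemma divm_zero: "divm S (\<lambda>x. 0) = (\<lambda>v. 0)"
  by (simp add: divm_def fun_eq_iff)

lemma Princ_sub: "Princ S \<subseteq> carrier (TDiv S)"
  unfolding Princ_def using divm_carrier by blast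

lemma Princ_subgroup: "subgroup (Princ S) (TDiv S)"
proof (rule TD.subgroupI)
  show "Princ S \<subseteq> carrier (TDiv S)" by (rule Princ_sub)
  show "Princ S \<noteq> {}" unfolding Princ_def using charlat_zero by blast
next
  fix a assume "a \<in> Princ S"
  then obtain m where m: "m \<in> charlat" "a = divm S m" unfolding Princ_def by blast
  have "inv\<^bsub>TDiv S\<^esub> a = divm S (\<lambda>x. - m x)"
    using m by (simp add: TDiv_inv divm_carrier divm_neg)
  then show "inv\<^bsub>TDiv S\<^esub> a \<in> Princ S" unfolding Princ_def using charlat_neg[OF m(1)] by blast
next
  fix a b assume "a \<in> Princ S" "b \<in> Princ S"
  then obtain m1 m2 where m: "m1 \<in> charlat" "a = divm S m1" "m2 \<in> charlat" "b = divm S m2"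
    unfolding Princ_def by blast
  have "a \<otimes>\<^bsub>TDiv S\<^esub> b = divm S (\<lambda>x. m1 x + m2 x)"
    using m by (simp add: TDiv_mult divm_add)
  then show "a \<otimes>\<^bsub>TDiv S\<^esub> b \<in> Princ S" unfolding Princ_def using charlat_add[OF m(1,3)] by blast
qed

lemma Princ_normal: "Princ S \<lhd> TDiv S"
  by (rule TD.subgroup_imp_normal[OF Princ_subgroup])

lemma Pic_cg: "comm_group (Pic S)"
  unfolding Pic_def by (rule TD.abelian_FactGroup[OF Princ_subgroup])

interpretation PG: comm_group "Pic S" by (rule Pic_cg)

lemma Pic_carrier: "carrier (Pic S) = cls S ` carrier (TDiv S)"
  unfolding Pic_def cls_def by (rule carrier_FactGroup)

lemma cls_carrier: "D \<in> carrier (TDiv S) \<Longrightarrow> cls S D \<in> carrier (Pic S)"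
  using Pic_carrier by blast

lemma cls_mult: "D \<in> carrier (TDiv S) \<Longrightarrow> E \<in> carrier (TDiv S) \<Longrightarrow>
    cls S D \<otimes>\<^bsub>Pic S\<^esub> cls S E = cls S (\<lambda>v. D v + E v)"
  unfolding Pic_def cls_def FactGroup_def
  using normal.rcos_sum[OF Princ_normal] by (simp add: TDiv_mult)

lemma Pic_one: "\<one>\<^bsub>Pic S\<^esub> = cls S (\<lambda>v. 0)"
proof -
  have "\<one>\<^bsub>Pic S\<^esub> = Princ S" unfolding Pic_def FactGroup_def by simp
  also have "\<dots> = Princ S #>\<^bsub>TDiv S\<^esub> \<one>\<^bsub>TDiv S\<^esub>" using Princ_sub by simp
  finally show ?thesis unfolding cls_def TDiv_one .
qed

lemma cls_explicit: "cls S D = {(\<lambda>v. divm S m v + D v) | m. m \<in> charlat}"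
  unfolding cls_def r_coset_def Princ_def by (auto simp: TDiv_mult)

lemma cls_eq_iff:
  assumes "D \<in> carrier (TDiv S)" "E \<in> carrier (TDiv S)"
  shows "cls S D = cls S E \<longleftrightarrow> (\<exists>m\<in>charlat. D = (\<lambda>v. divm S m v + E v))"
proof
  assume "cls S D = cls S E"
  then have "D \<in> cls S E" unfolding cls_def using TD.repr_independenceD[OF Princ_subgroup assms(1)] by simp
  then show "\<exists>m\<in>charlat. D = (\<lambda>v. divm S m v + E v)" unfolding cls_explicit by blast
next
  assume "\<exists>m\<in>charlat. D = (\<lambda>v. divm S m v + E v)"
  then have "D \<in> cls S E" unfolding cls_explicit by blast
  then show "cls S D = cls S E" unfolding cls_def
    using TD.repr_independence[OF _ assms(2) Princ_subgroup] by simp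
qed

lemma cls_inv: "D \<in> carrier (TDiv S) \<Longrightarrow> inv\<^bsub>Pic S\<^esub> (cls S D) = cls S (\<lambda>v. - D v)"
proof (rule PG.inv_equality)
  assume D: "D \<in> carrier (TDiv S)"
  have mD: "(\<lambda>v. - D v) \<in> carrier (TDiv S)" using D by (simp add: TDiv_carrier)
  show "cls S (\<lambda>v. - D v) \<otimes>\<^bsub>Pic S\<^esub> cls S D = \<one>\<^bsub>Pic S\<^esub>"
    using cls_mult[OF mD D] by (simp add: Pic_one)
  show "cls S D \<in> carrier (Pic S)" by (rule cls_carrier[OF D])
  show "cls S (\<lambda>v. - D v) \<in> carrier (Pic S)" by (rule cls_carrier[OF mD])
qed


section \<open>Automorphisms and actions\<close>

lemma aut_bij: "g \<in> AutSigma S \<Longrightarrow> bij g"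
  and aut_add: "g \<in> AutSigma S \<Longrightarrow> additive_map g"
  and aut_img: "g \<in> AutSigma S \<Longrightarrow> (\<lambda>\<sigma>. g ` \<sigma>) ` S = S"
  by (simp_all add: AutSigma_def)

lemma aut_rays: assumes "g \<in> AutSigma S" shows "g ` rays S = rays S"
proof -
  have "g ` rays S = \<Union>((\<lambda>\<sigma>. g ` \<sigma>) ` S)" unfolding rays_def by auto
  then show ?thesis using aut_img[OF assms] unfolding rays_def by simp
qed

lemma aut_mem_rays: assumes "g \<in> AutSigma S" shows "g v \<in> rays S \<longleftrightarrow> v \<in> rays S"
proof -
  have "inj g" using aut_bij[OF assms] bij_is_inj by blast
  then have "g v \<in> g ` rays S \<longleftrightarrow> v \<in> rays S" by (simp add: inj_image_mem_iff)
  then show ?thesis using aut_rays[OF assms] by simp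
qed

lemma aut_inv: assumes "g \<in> AutSigma S" shows "hinv g \<in> AutSigma S"
proof -
  have b: "bij g" by (rule aut_bij[OF assms])
  have i: "inj g" using b bij_is_inj by blast
  have "(\<lambda>\<sigma>. hinv g ` \<sigma>) ` S = S"
  proof
    show "(\<lambda>\<sigma>. hinv g ` \<sigma>) ` S \<subseteq> S"
    proof
      fix \<tau> assume "\<tau> \<in> (\<lambda>\<sigma>. hinv g ` \<sigma>) ` S"
      then obtain \<sigma> where s: "\<sigma> \<in> S" "\<tau> = hinv g ` \<sigma>" by blast
      have "\<sigma> \<in> (\<lambda>\<sigma>. g ` \<sigma>) ` S" using s(1) aut_img[OF assms] by simp
      then obtain \<rho> where r: "\<rho> \<in> S" "\<sigma> = g ` \<rho>" by (rule imageE)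
      have "\<tau> = \<rho>" using s(2) r(2) i by (simp add: image_inv_f_f)
      then show "\<tau> \<in> S" using r(1) by simp
    qed
    show "S \<subseteq> (\<lambda>\<sigma>. hinv g ` \<sigma>) ` S"
    proof
      fix \<tau> assume t: "\<tau> \<in> S"
      have "g ` \<tau> \<in> (\<lambda>\<sigma>. g ` \<sigma>) ` S" using t by (rule imageI)
      then have "g ` \<tau> \<in> S" using aut_img[OF assms] by simp
      moreover have "\<tau> = hinv g ` (g ` \<tau>)" using i by (simp add: image_inv_f_f)
      ultimately show "\<tau> \<in> (\<lambda>\<sigma>. hinv g ` \<sigma>) ` S" by (rule rev_image_eqI)
    qed
  qed
  moreover have "bij (hinv g)" using b by (rule bij_imp_bij_inv)
  moreover have "additive_map (hinv g)" by (rule additive_inv[OF aut_add[OF assms] b])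
  ultimately show ?thesis unfolding AutSigma_def by (simp only: mem_Collect_eq)
qed

lemma aut_comp: assumes "g \<in> AutSigma S" "h \<in> AutSigma S" shows "g \<circ> h \<in> AutSigma S"
proof -
  have "(\<lambda>\<sigma>. (g \<circ> h) ` \<sigma>) ` S = (\<lambda>\<sigma>. g ` \<sigma>) ` ((\<lambda>\<sigma>. h ` \<sigma>) ` S)"
    by (simp add: image_comp)
  also have "\<dots> = S" using aut_img[OF assms(1)] aut_img[OF assms(2)] by simp
  moreover have "bij (g \<circ> h)" using aut_bij[OF assms(1)] aut_bij[OF assms(2)] by (rule bij_comp[rotated])
  moreover have "additive_map (g \<circ> h)" using aut_add[OF assms(1)] aut_add[OF assms(2)] by (rule additive_comp)
  ultimately show ?thesis unfolding AutSigma_def by (simp only: mem_Collect_eq)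
qed

lemma aut_id: "id \<in> AutSigma S"
  by (simp add: AutSigma_def additive_map_def)

lemma act_TDiv: assumes "g \<in> AutSigma S" "D \<in> carrier (TDiv S)" shows "act g D \<in> carrier (TDiv S)"
proof -
  have "hinv g \<in> AutSigma S" by (rule aut_inv[OF assms(1)])
  then show ?thesis using assms(2) aut_mem_rays by (simp add: TDiv_carrier act_def)
qed

lemma act_add: "act g (\<lambda>v. D v + E v) = (\<lambda>v. act g D v + act g E v)"
  by (simp add: act_def fun_eq_iff)

lemma act_diff: "act g (\<lambda>v. D v - E v) = (\<lambda>v. act g D v - act g E v)"
  by (simp add: act_def fun_eq_iff)

lemma act_neg: "act g (\<lambda>v. - D v) = (\<lambda>v. - act g D v)"
  by (simp add: act_def fun_eq_iff)

lemma act_smult: "act g (\<lambda>v. k * D v) = (\<lambda>v. k * act g D v)"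
  by (simp add: act_def fun_eq_iff)

lemma act_zero: "act g (\<lambda>v. 0) = (\<lambda>v. 0)"
  by (simp add: act_def fun_eq_iff)

lemma act_charlat: assumes "g \<in> AutSigma S" "m \<in> charlat" shows "act g m \<in> charlat"
proof -
  have "additive_map (hinv g)" using additive_inv[OF aut_add[OF assms(1)] aut_bij[OF assms(1)]] .
  then show ?thesis using assms(2) unfolding act_def charlat_iff by (rule additive_comp[rotated])
qed

lemma act_divm: assumes "g \<in> AutSigma S" shows "act g (divm S m) = divm S (act g m)"
proof -
  have "hinv g \<in> AutSigma S" by (rule aut_inv[OF assms(1)])
  then show ?thesis using aut_mem_rays by (simp add: act_def divm_def fun_eq_iff)
qed

lemma act_comp: assumes "bij g" "bij h" shows "act (g \<circ> h) D = act g (act h D)"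
  unfolding act_def using assms by (simp add: o_inv_distrib o_assoc)

lemma act_id: "act id D = D"
  by (simp add: act_def)

lemma act_inv_act: assumes "bij g" shows "act (hinv g) (act g D) = D"
proof -
  have "hinv (hinv g) = g" using assms by (simp add: inv_inv_eq)
  moreover have "hinv g \<circ> g = id" using assms by (simp add: bij_is_inj inv_o_cancel)
  ultimately show ?thesis unfolding act_def by (simp add: o_assoc[symmetric])
qed

lemma act_act_inv: assumes "bij g" shows "act g (act (hinv g) D) = D"
proof -
  have "hinv (hinv g) = g" using assms by (simp add: inv_inv_eq)
  moreover have "g \<circ> hinv g = id" using assms by (intro ext) (simp add: bij_is_surj surj_f_inv_f)
  ultimately show ?thesis unfolding act_def by (simp add: o_assoc[symmetric])
qed

lemma act_cls: assumes "g \<in> AutSigma S" "D \<in> carrier (TDiv S)"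
  shows "act g ` cls S D = cls S (act g D)"
proof
  show "act g ` cls S D \<subseteq> cls S (act g D)"
  proof
    fix x assume "x \<in> act g ` cls S D"
    then obtain m where m: "m \<in> charlat" "x = act g (\<lambda>v. divm S m v + D v)"
      unfolding cls_explicit by blast
    then have "x = (\<lambda>v. divm S (act g m) v + act g D v)"
      using act_divm[OF assms(1)] by (simp add: act_add)
    then show "x \<in> cls S (act g D)" unfolding cls_explicit using act_charlat[OF assms(1) m(1)] by blast
  qed
  show "cls S (act g D) \<subseteq> act g ` cls S D"
  proof
    fix x assume "x \<in> cls S (act g D)"
    then obtain m where m: "m \<in> charlat" "x = (\<lambda>v. divm S m v + act g D v)"
      unfolding cls_explicit by blast
    let ?m = "act (hinv g) m"
    have gi: "hinv g \<in> AutSigma S" by (rule aut_inv[OF assms(1)])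
    have "act g (\<lambda>v. divm S ?m v + D v) = (\<lambda>v. divm S (act g ?m) v + act g D v)"
      using act_divm[OF assms(1)] by (simp add: act_add)
    also have "act g ?m = m" by (rule act_act_inv[OF aut_bij[OF assms(1)]])
    finally have "x = act g (\<lambda>v. divm S ?m v + D v)" using m(2) by simp
    moreover have "(\<lambda>v. divm S ?m v + D v) \<in> cls S D"
      unfolding cls_explicit using act_charlat[OF gi m(1)] by blast
    ultimately show "x \<in> act g ` cls S D" by blast
  qed
qed

lemma picact_cls: assumes "g \<in> AutSigma S" "D \<in> carrier (TDiv S)"
  shows "picact S g (cls S D) = cls S (act g D)"
  using act_cls[OF assms] cls_carrier[OF assms(2)] by (simp add: picact_def)

lemma picact_carrier: assumes "g \<in> AutSigma S" "C \<in> carrier (Pic S)"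
  shows "picact S g C \<in> carrier (Pic S)"
proof -
  obtain D where "D \<in> carrier (TDiv S)" "C = cls S D" using assms(2) Pic_carrier by blast
  then show ?thesis using picact_cls[OF assms(1)] act_TDiv[OF assms(1)] cls_carrier by simp
qed

lemma picact_comp_app: assumes "g \<in> AutSigma S" "h \<in> AutSigma S" "C \<in> carrier (Pic S)"
  shows "picact S (g \<circ> h) C = picact S g (picact S h C)"
proof -
  obtain D where D: "D \<in> carrier (TDiv S)" "C = cls S D" using assms(3) Pic_carrier by blast
  show ?thesis using D picact_cls[OF aut_comp[OF assms(1,2)]] picact_cls[OF assms(1)] picact_cls[OF assms(2)]
      act_TDiv[OF assms(2)] act_comp[OF aut_bij[OF assms(1)] aut_bij[OF assms(2)]] by simp
qed

lemma picact_id_app: "C \<in> carrier (Pic S) \<Longrightarrow> picact S id C = C"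
  by (simp add: picact_def act_def)

lemma picact_id_app': "C \<in> carrier (Pic S) \<Longrightarrow> picact S (\<lambda>x. x) C = C"
  using picact_id_app by (simp add: id_def)

lemma picact_ext: "picact S g \<in> extensional (carrier (Pic S))"
  by (simp add: picact_def)

lemma picact_Bij: assumes "g \<in> AutSigma S" shows "picact S g \<in> Bij (carrier (Pic S))"
proof -
  have gi: "hinv g \<in> AutSigma S" by (rule aut_inv[OF assms])
  have "bij_betw (picact S g) (carrier (Pic S)) (carrier (Pic S))"
  proof (rule bij_betw_byWitness[where f' = "picact S (hinv g)"])
    show "\<forall>a\<in>carrier (Pic S). picact S (hinv g) (picact S g a) = a"
    proof
      fix a assume a: "a \<in> carrier (Pic S)"
      have "picact S (hinv g) (picact S g a) = picact S (hinv g \<circ> g) a"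
        using picact_comp_app[OF gi assms a] by simp
      also have "hinv g \<circ> g = id" using aut_bij[OF assms] by (simp add: bij_is_inj inv_o_cancel)
      finally show "picact S (hinv g) (picact S g a) = a" using picact_id_app[OF a] picact_id_app'[OF a] by simp
    qed
    show "\<forall>a'\<in>carrier (Pic S). picact S g (picact S (hinv g) a') = a'"
    proof
      fix a assume a: "a \<in> carrier (Pic S)"
      have "picact S g (picact S (hinv g) a) = picact S (g \<circ> hinv g) a"
        using picact_comp_app[OF assms gi a] by simp
      also have "g \<circ> hinv g = id" using aut_bij[OF assms] by (intro ext) (simp add: bij_is_surj surj_f_inv_f)
      finally show "picact S g (picact S (hinv g) a) = a" using picact_id_app[OF a] picact_id_app'[OF a] by simp
    qed
    show "picact S g ` carrier (Pic S) \<subseteq> carrier (Pic S)" using picact_carrier[OF assms] by blast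
    show "picact S (hinv g) ` carrier (Pic S) \<subseteq> carrier (Pic S)" using picact_carrier[OF gi] by blast
  qed
  then show ?thesis using picact_ext by (simp add: Bij_def)
qed

lemma picact_comp: assumes "g \<in> AutSigma S" "h \<in> AutSigma S"
  shows "picact S (g \<circ> h) = picact S g \<otimes>\<^bsub>BijGroup (carrier (Pic S))\<^esub> picact S h"
proof -
  have "picact S g \<otimes>\<^bsub>BijGroup (carrier (Pic S))\<^esub> picact S h = compose (carrier (Pic S)) (picact S g) (picact S h)"
    using picact_Bij[OF assms(1)] picact_Bij[OF assms(2)] by (simp add: BijGroup_def)
  also have "\<dots> = picact S (g \<circ> h)"
  proof (rule extensionalityI[OF compose_extensional picact_ext])
    fix C assume "C \<in> carrier (Pic S)"
    then show "compose (carrier (Pic S)) (picact S g) (picact S h) C = picact S (g \<circ> h) C"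
      using picact_comp_app[OF assms] by (simp add: compose_def)
  qed
  finally show ?thesis by simp
qed

lemma picact_id: "picact S id = \<one>\<^bsub>BijGroup (carrier (Pic S))\<^esub>"
  by (simp add: BijGroup_def picact_def act_def fun_eq_iff restrict_def)

lemma picact_mult: assumes "g \<in> AutSigma S" "C1 \<in> carrier (Pic S)" "C2 \<in> carrier (Pic S)"
  shows "picact S g (C1 \<otimes>\<^bsub>Pic S\<^esub> C2) = picact S g C1 \<otimes>\<^bsub>Pic S\<^esub> picact S g C2"
proof -
  obtain D1 where D1: "D1 \<in> carrier (TDiv S)" "C1 = cls S D1" using assms(2) Pic_carrier by blast
  obtain D2 where D2: "D2 \<in> carrier (TDiv S)" "C2 = cls S D2" using assms(3) Pic_carrier by blast
  have s: "(\<lambda>v. D1 v + D2 v) \<in> carrier (TDiv S)" using D1 D2 by (simp add: TDiv_carrier)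
  show ?thesis using D1 D2 s cls_mult picact_cls[OF assms(1)] act_TDiv[OF assms(1)] by (simp add: act_add)
qed


lemma aut_funpow: assumes "g \<in> AutSigma S" shows "g ^^ k \<in> AutSigma S"
proof (induction k)
  case 0 show ?case using aut_id by (simp add: id_def)
next
  case (Suc k) show ?case unfolding funpow.simps(2) by (rule aut_comp[OF assms Suc.IH])
qed

lemma aut_fix_rays_id:
  assumes "h \<in> AutSigma S" "\<forall>v\<in>rays S. h v = v"
  shows "h = id"
proof
  fix x
  show "h x = id x"
  proof (subst vec_eq_iff, intro allI)
    fix t
    have a1: "additive_map (\<lambda>x. h x $ t)" using aut_add[OF assms(1)] by (simp add: additive_map_def)
    have a2: "additive_map (\<lambda>x::int^'n. x $ t)" by (simp add: additive_map_def)
    have "(\<lambda>x. h x $ t) = (\<lambda>x. x $ t)" by (rule span_eq[OF a1 a2]) (simp add: assms(2))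
    then show "h x $ t = id x $ t" by (simp add: fun_eq_iff)
  qed
qed

lemma aut_finite_order:
  assumes "g \<in> AutSigma S" shows "\<exists>k>0. g ^^ k = id"
proof -
  let ?F = "\<lambda>i. restrict (g ^^ i) (rays S)"
  have rng: "range ?F \<subseteq> (\<Pi>\<^sub>E v\<in>rays S. rays S)"
  proof
    fix f assume "f \<in> range ?F"
    then obtain i where i: "f = ?F i" by blast
    have "\<And>v. v \<in> rays S \<Longrightarrow> (g ^^ i) v \<in> rays S" using aut_mem_rays[OF aut_funpow[OF assms]] by blast
    then show "f \<in> (\<Pi>\<^sub>E v\<in>rays S. rays S)" using i by auto
  qed
  have "finite (\<Pi>\<^sub>E v\<in>rays S. rays S)" using finite_rays by (simp add: finite_PiE)
  then have fr: "finite (range ?F)" using rng finite_subset by blast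
  have "\<not> inj ?F"
  proof
    assume "inj ?F"
    then have "finite (UNIV :: nat set)" using fr finite_imageD by blast
    then show False by simp
  qed
  then obtain i j where ij: "?F i = ?F j" "i \<noteq> j" unfolding inj_def by blast
  have "\<exists>i j. i < j \<and> ?F i = ?F j"
  proof (cases "i < j")
    case True then show ?thesis using ij by blast
  next
    case False then have "j < i" using ij(2) by simp
    then show ?thesis using ij(1) by metis
  qed
  then obtain a b where ab: "a < b" "?F a = ?F b" by blast
  define k where "k = b - a"
  have kpos: "k > 0" using ab(1) k_def by simp
  have hk: "g ^^ k \<in> AutSigma S" by (rule aut_funpow[OF assms])
  have injga: "inj (g ^^ a)" using aut_bij[OF assms] by (simp add: bij_is_inj)
  have "\<forall>v\<in>rays S. (g ^^ k) v = v"
  proof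
    fix v assume v: "v \<in> rays S"
    have "(g ^^ a) ((g ^^ k) v) = (g ^^ (a + k)) v" by (simp add: funpow_add)
    also have "a + k = b" using ab(1) k_def by simp
    also have "(g ^^ b) v = (g ^^ a) v" using ab(2) v by (metis restrict_apply')
    finally show "(g ^^ k) v = v" using injga by (simp add: inj_eq)
  qed
  then have "g ^^ k = id" by (rule aut_fix_rays_id[OF hk])
  then show ?thesis using kpos by blast
qed

end

section \<open>The group W\<close>

locale toricJ = toric +
  fixes J :: "((int ^ 'n \<Rightarrow> int) set \<Rightarrow> (int ^ 'n \<Rightarrow> int) set) set"
  assumes Jsub: "subgroup J (BijGroup (carrier (Pic S)))"
    and JAut: "J \<subseteq> AutP S"
begin

abbreviation "W \<equiv> Wgrp S J"

interpretation BG: group "BijGroup (carrier (Pic S))" by (rule group_BijGroup)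

lemma W_iff: "g \<in> W \<longleftrightarrow> g \<in> AutSigma S \<and> picact S g \<in> J"
  by (simp add: Wgrp_def)

lemma W_aut: "g \<in> W \<Longrightarrow> g \<in> AutSigma S"
  by (simp add: W_iff)

lemma W_comp: assumes "g \<in> W" "h \<in> W" shows "g \<circ> h \<in> W"
proof -
  have "picact S (g \<circ> h) \<in> J"
    using picact_comp[OF W_aut[OF assms(1)] W_aut[OF assms(2)]] subgroup.m_closed[OF Jsub] assms
    by (simp add: W_iff)
  then show ?thesis using aut_comp[OF W_aut[OF assms(1)] W_aut[OF assms(2)]] by (simp add: W_iff)
qed

lemma W_id: "id \<in> W"
  using aut_id picact_id subgroup.one_closed[OF Jsub] by (simp add: W_iff)

lemma W_inv: assumes "g \<in> W" shows "hinv g \<in> W"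
proof -
  have ga: "g \<in> AutSigma S" by (rule W_aut[OF assms])
  have gi: "hinv g \<in> AutSigma S" by (rule aut_inv[OF ga])
  have "picact S (hinv g) \<otimes>\<^bsub>BijGroup (carrier (Pic S))\<^esub> picact S g = picact S (hinv g \<circ> g)"
    by (rule picact_comp[OF gi ga, symmetric])
  also have "hinv g \<circ> g = id" using aut_bij[OF ga] by (simp add: bij_is_inj inv_o_cancel)
  finally have "picact S (hinv g) \<otimes>\<^bsub>BijGroup (carrier (Pic S))\<^esub> picact S g = \<one>\<^bsub>BijGroup (carrier (Pic S))\<^esub>"
    using picact_id by (simp add: id_def)
  then have "inv\<^bsub>BijGroup (carrier (Pic S))\<^esub> picact S g = picact S (hinv g)"
    by (rule BG.inv_equality) (simp_all add: BijGroup_def picact_Bij ga gi)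
  moreover have "inv\<^bsub>BijGroup (carrier (Pic S))\<^esub> picact S g \<in> J"
    using subgroup.m_inv_closed[OF Jsub] assms by (simp add: W_iff)
  ultimately show ?thesis using gi by (simp add: W_iff)
qed

lemma W_funpow: assumes "g \<in> W" shows "g ^^ k \<in> W"
proof (induction k)
  case 0 show ?case using W_id by (simp add: id_def)
next
  case (Suc k) show ?case unfolding funpow.simps(2) by (rule W_comp[OF assms Suc.IH])
qed

lemma J_picact: assumes "j \<in> J" shows "\<exists>g\<in>W. j = picact S g"
proof -
  have "j \<in> AutP S" using assms JAut by blast
  then obtain g where g: "g \<in> AutSigma S" "j = picact S g" unfolding AutP_def by blast
  then have "g \<in> W" using assms by (simp add: W_iff)
  then show ?thesis using g(2) by blast
qed

lemma W_inv_inv: "g \<in> W \<Longrightarrow> hinv g \<circ> g = id"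
  using aut_bij[OF W_aut] by (simp add: bij_is_inj inv_o_cancel)

lemma W_inv_inv': "g \<in> W \<Longrightarrow> g \<circ> hinv g = id"
  using aut_bij[OF W_aut] by (intro ext) (simp add: bij_is_surj surj_f_inv_f)

lemma W_app_inv: "g \<in> W \<Longrightarrow> g (hinv g x) = x"
  using aut_bij[OF W_aut] by (simp add: bij_is_surj surj_f_inv_f)

lemma W_inv_app: "g \<in> W \<Longrightarrow> hinv g (g x) = x"
  using aut_bij[OF W_aut] by (simp add: bij_is_inj inv_f_f)


section \<open>Cocycles\<close>

lemma Z1_iff: "f \<in> Z1 W \<longleftrightarrow> f \<in> W \<rightarrow>\<^sub>E charlat \<and>
    (\<forall>g\<in>W. \<forall>h\<in>W. f (g \<circ> h) = (\<lambda>v. f g v + act g (f h) v))"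
  by (simp add: Z1_def)

lemma Z1_coc: "f \<in> Z1 W \<Longrightarrow> g \<in> W \<Longrightarrow> h \<in> W \<Longrightarrow> f (g \<circ> h) v = f g v + act g (f h) v"
  by (simp add: Z1_iff)

lemma Z1_charlat: "f \<in> Z1 W \<Longrightarrow> g \<in> W \<Longrightarrow> f g \<in> charlat"
  by (auto simp: Z1_iff)

lemma Z1_id: assumes "f \<in> Z1 W" shows "f id v = 0"
proof -
  have "f (id \<circ> id) v = f id v + act id (f id) v" by (rule Z1_coc[OF assms W_id W_id])
  then show ?thesis by (simp add: act_id)
qed

lemma Z1_stab: assumes "f \<in> Z1 W" "s \<in> W" "s r = r" shows "f s r = 0"
proof -
  obtain k where k: "k > 0" "s ^^ k = id" using aut_finite_order[OF W_aut[OF assms(2)]] by blast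
  have sr: "hinv s r = r" using W_inv_app[OF assms(2), of r] assms(3) by simp
  have "\<forall>j. f (s ^^ j) r = int j * f s r"
  proof
    fix j show "f (s ^^ j) r = int j * f s r"
    proof (induction j)
      case 0
      have "s ^^ 0 = id" by simp
      then show ?case using Z1_id[OF assms(1)] by (simp add: id_def)
    next
      case (Suc j)
      have "f (s ^^ Suc j) r = f (s \<circ> s ^^ j) r" by simp
      also have "\<dots> = f s r + act s (f (s ^^ j)) r" by (rule Z1_coc[OF assms(1,2) W_funpow[OF assms(2)]])
      also have "act s (f (s ^^ j)) r = f (s ^^ j) r" using sr by (simp add: act_def)
      finally show ?case using Suc.IH by (simp add: algebra_simps)
    qed
  qed
  then have "f (s ^^ k) r = int k * f s r" by blast
  then have "int k * f s r = 0" using k(2) Z1_id[OF assms(1)] by simp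
  then show ?thesis using k(1) by simp
qed

lemma Z1_welldef:
  assumes "f \<in> Z1 W" "h1 \<in> W" "h2 \<in> W" "h1 r = h2 r"
  shows "f h1 (h1 r) = f h2 (h2 r)"
proof -
  let ?s = "hinv h1 \<circ> h2"
  have sW: "?s \<in> W" by (rule W_comp[OF W_inv[OF assms(2)] assms(3)])
  have sr: "?s r = r" using assms(4) W_inv_app[OF assms(2)] by (metis comp_apply)
  have h2eq: "h1 \<circ> ?s = h2" using W_inv_inv'[OF assms(2)] by (simp add: o_assoc)
  have "f h2 (h2 r) = f (h1 \<circ> ?s) (h2 r)" using h2eq by simp
  also have "\<dots> = f h1 (h2 r) + act h1 (f ?s) (h2 r)" by (rule Z1_coc[OF assms(1,2) sW])
  also have "act h1 (f ?s) (h2 r) = f ?s r" using sr by (simp add: act_def)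
  also have "f ?s r = 0" by (rule Z1_stab[OF assms(1) sW sr])
  finally show ?thesis using assms(4) by simp
qed

definition orb :: "int ^ 'n \<Rightarrow> (int ^ 'n) set" where
  "orb x = (\<lambda>g. g x) ` W"

lemma orb_self: "x \<in> orb x"
  unfolding orb_def using W_id by (metis id_apply rev_image_eqI)

lemma orb_eq: assumes "g \<in> W" shows "orb (g x) = orb x"
proof
  show "orb (g x) \<subseteq> orb x"
  proof
    fix y assume "y \<in> orb (g x)"
    then obtain h where h: "h \<in> W" "y = h (g x)" unfolding orb_def by blast
    then have "y = (h \<circ> g) x" by simp
    then show "y \<in> orb x" unfolding orb_def using W_comp[OF h(1) assms] by blast
  qed
  show "orb x \<subseteq> orb (g x)"
  proof
    fix y assume "y \<in> orb x"
    then obtain h where h: "h \<in> W" "y = h x" unfolding orb_def by blast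
    then have "y = (h \<circ> hinv g) (g x)" using W_inv_app[OF assms] by simp
    then show "y \<in> orb (g x)" unfolding orb_def using W_comp[OF h(1) W_inv[OF assms]] by blast
  qed
qed

definition orep :: "int ^ 'n \<Rightarrow> int ^ 'n" where
  "orep x = (SOME y. y \<in> orb x)"

definition osel :: "int ^ 'n \<Rightarrow> int ^ 'n \<Rightarrow> int ^ 'n" where
  "osel x = (SOME g. g \<in> W \<and> g (orep x) = x)"

lemma orep_eq: "g \<in> W \<Longrightarrow> orep (g x) = orep x"
  unfolding orep_def using orb_eq by simp

lemma osel_prop: "osel x \<in> W \<and> osel x (orep x) = x"
proof -
  have "orep x \<in> orb x" unfolding orep_def using orb_self by (rule someI)
  then obtain h where h: "h \<in> W" "orep x = h x" unfolding orb_def by blast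
  have "hinv h \<in> W \<and> hinv h (orep x) = x" using h W_inv W_inv_app by simp
  then have "\<exists>g. g \<in> W \<and> g (orep x) = x" by blast
  then show ?thesis unfolding osel_def by (rule someI_ex)
qed

definition solves :: "((int ^ 'n \<Rightarrow> int ^ 'n) \<Rightarrow> (int ^ 'n \<Rightarrow> int)) \<Rightarrow> (int ^ 'n \<Rightarrow> int) \<Rightarrow> bool" where
  "solves f D \<longleftrightarrow> D \<in> carrier (TDiv S) \<and> (\<forall>g\<in>W. divm S (f g) = (\<lambda>v. act g D v - D v))"

lemma cob_exists: assumes "f \<in> Z1 W" shows "\<exists>D. solves f D"
proof -
  define D where "D = (\<lambda>v. if v \<in> rays S then - f (osel v) v else 0)"
  have Dc: "D \<in> carrier (TDiv S)" unfolding D_def by (simp add: TDiv_carrier)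
  have "\<forall>g\<in>W. divm S (f g) = (\<lambda>v. act g D v - D v)"
  proof (intro ballI ext)
    fix g v assume g: "g \<in> W"
    have ga: "g \<in> AutSigma S" by (rule W_aut[OF g])
    have gi: "hinv g \<in> AutSigma S" by (rule aut_inv[OF ga])
    show "divm S (f g) v = act g D v - D v"
    proof (cases "v \<in> rays S")
      case False
      then have "hinv g v \<notin> rays S" using aut_mem_rays[OF gi] by simp
      then show ?thesis using False by (simp add: divm_def act_def D_def)
    next
      case True
      let ?r1 = "hinv g v"
      have r1: "?r1 \<in> rays S" using True aut_mem_rays[OF gi] by simp
      have vr: "v = g ?r1" using W_app_inv[OF g] by simp
      have rep: "orep ?r1 = orep v" using orep_eq[OF g, of ?r1] vr by simp
      let ?g1 = "osel ?r1" and ?g2 = "osel v" and ?r = "orep v"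
      have g1: "?g1 \<in> W" "?g1 ?r = ?r1" using osel_prop[of ?r1] rep by simp_all
      have g2: "?g2 \<in> W" "?g2 ?r = v" using osel_prop[of v] by simp_all
      have gg1: "g \<circ> ?g1 \<in> W" by (rule W_comp[OF g g1(1)])
      have "(g \<circ> ?g1) ?r = ?g2 ?r" using g1(2) g2(2) vr by simp
      then have "f (g \<circ> ?g1) ((g \<circ> ?g1) ?r) = f ?g2 (?g2 ?r)" by (rule Z1_welldef[OF assms gg1 g2(1)])
      then have "f (g \<circ> ?g1) v = f ?g2 v" using g1(2) g2(2) vr by simp
      moreover have "f (g \<circ> ?g1) v = f g v + f ?g1 ?r1"
        using Z1_coc[OF assms g g1(1)] by (simp add: act_def)
      ultimately have "f g v = f ?g2 v - f ?g1 ?r1" by simp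
      then show ?thesis using True r1 by (simp add: divm_def act_def D_def)
    qed
  qed
  then show ?thesis using Dc unfolding solves_def by blast
qed


section \<open>Invariant classes\<close>

interpretation TD: comm_group "TDiv S" by (rule TDiv_cg)
interpretation PG: comm_group "Pic S" by (rule Pic_cg)

lemma divm_inj: assumes "m1 \<in> charlat" "m2 \<in> charlat" "divm S m1 = divm S m2" shows "m1 = m2"
proof (rule span_eq)
  show "additive_map m1" "additive_map m2" using assms(1,2) by (simp_all add: charlat_iff)
  show "\<forall>v\<in>rays S. m1 v = m2 v"
  proof
    fix v assume "v \<in> rays S"
    then show "m1 v = m2 v" using assms(3) unfolding divm_def by (metis (full_types))
  qed
qed

lemma PicInv_iff: "C \<in> PicInv S J \<longleftrightarrow> C \<in> carrier (Pic S) \<and> (\<forall>j\<in>J. j C = C)"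
  by (simp add: PicInv_def)

lemma PicInv_W: assumes "C \<in> carrier (Pic S)" "\<forall>g\<in>W. picact S g C = C" shows "C \<in> PicInv S J"
proof -
  have "\<forall>j\<in>J. j C = C"
  proof
    fix j assume "j \<in> J"
    then obtain g where "g \<in> W" "j = picact S g" using J_picact by blast
    then show "j C = C" using assms(2) by simp
  qed
  then show ?thesis using assms(1) by (simp add: PicInv_iff)
qed

lemma PicInv_picact: "C \<in> PicInv S J \<Longrightarrow> g \<in> W \<Longrightarrow> picact S g C = C"
  by (simp add: PicInv_iff W_iff)

lemma PicInv_subgroup: "subgroup (PicInv S J) (Pic S)"
proof (rule PG.subgroupI)
  show "PicInv S J \<subseteq> carrier (Pic S)" by (auto simp: PicInv_iff)
  have "\<one>\<^bsub>Pic S\<^esub> \<in> PicInv S J"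
  proof (rule PicInv_W)
    show "\<one>\<^bsub>Pic S\<^esub> \<in> carrier (Pic S)" by simp
    show "\<forall>g\<in>W. picact S g \<one>\<^bsub>Pic S\<^esub> = \<one>\<^bsub>Pic S\<^esub>"
      using picact_cls[OF W_aut] by (simp add: Pic_one act_zero TDiv_carrier)
  qed
  then show "PicInv S J \<noteq> {}" by blast
next
  fix a assume a: "a \<in> PicInv S J"
  then obtain D where D: "D \<in> carrier (TDiv S)" "a = cls S D" using Pic_carrier by (auto simp: PicInv_iff)
  have mD: "(\<lambda>v. - D v) \<in> carrier (TDiv S)" using D(1) by (simp add: TDiv_carrier)
  show "inv\<^bsub>Pic S\<^esub> a \<in> PicInv S J"
  proof (rule PicInv_W)
    show "inv\<^bsub>Pic S\<^esub> a \<in> carrier (Pic S)" using a by (simp add: PicInv_iff)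
    show "\<forall>g\<in>W. picact S g (inv\<^bsub>Pic S\<^esub> a) = inv\<^bsub>Pic S\<^esub> a"
    proof
      fix g assume g: "g \<in> W"
      have "picact S g (inv\<^bsub>Pic S\<^esub> a) = cls S (\<lambda>v. - act g D v)"
        using D cls_inv picact_cls[OF W_aut[OF g] mD] by (simp add: act_neg)
      also have "\<dots> = inv\<^bsub>Pic S\<^esub> (cls S (act g D))" using cls_inv[OF act_TDiv[OF W_aut[OF g] D(1)]] by simp
      also have "cls S (act g D) = a" using picact_cls[OF W_aut[OF g] D(1)] PicInv_picact[OF a g] D(2) by simp
      finally show "picact S g (inv\<^bsub>Pic S\<^esub> a) = inv\<^bsub>Pic S\<^esub> a" .
    qed
  qed
next
  fix a b assume a: "a \<in> PicInv S J" and b: "b \<in> PicInv S J"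
  show "a \<otimes>\<^bsub>Pic S\<^esub> b \<in> PicInv S J"
  proof (rule PicInv_W)
    show "a \<otimes>\<^bsub>Pic S\<^esub> b \<in> carrier (Pic S)" using a b by (simp add: PicInv_iff)
    show "\<forall>g\<in>W. picact S g (a \<otimes>\<^bsub>Pic S\<^esub> b) = a \<otimes>\<^bsub>Pic S\<^esub> b"
      using picact_mult[OF W_aut] a b PicInv_picact by (simp add: PicInv_iff)
  qed
qed

abbreviation "PIG \<equiv> PicInvGrp S J"

lemma PIG_simps: "carrier PIG = PicInv S J" "monoid.mult PIG = monoid.mult (Pic S)" "monoid.one PIG = monoid.one (Pic S)"
  by (simp_all add: PicInvGrp_def)

lemma PIG_cg: "comm_group PIG"
proof -
  have "group PIG" unfolding PicInvGrp_def by (rule PG.subgroup_imp_group[OF PicInv_subgroup])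
  then show ?thesis
  proof (rule group.group_comm_groupI)
    fix x y assume "x \<in> carrier PIG" "y \<in> carrier PIG"
    then show "x \<otimes>\<^bsub>PIG\<^esub> y = y \<otimes>\<^bsub>PIG\<^esub> x"
      using PicInv_subgroup by (simp add: PIG_simps PG.m_comm subgroup.mem_carrier)
  qed
qed

interpretation PIGg: comm_group PIG by (rule PIG_cg)

abbreviation "Icls \<equiv> cls S ` TDivInv S W"

lemma TDivInv_iff: "E \<in> TDivInv S W \<longleftrightarrow> E \<in> carrier (TDiv S) \<and> (\<forall>g\<in>W. act g E = E)"
  by (simp add: TDivInv_def)

lemma Icls_PicInv: "Icls \<subseteq> PicInv S J"
proof
  fix C assume "C \<in> Icls"
  then obtain E where E: "E \<in> TDivInv S W" "C = cls S E" by blast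
  show "C \<in> PicInv S J"
  proof (rule PicInv_W)
    show "C \<in> carrier (Pic S)" using E cls_carrier by (simp add: TDivInv_iff)
    show "\<forall>g\<in>W. picact S g C = C" using E picact_cls[OF W_aut] by (simp add: TDivInv_iff)
  qed
qed

lemma Icls_subgroup_Pic: "subgroup Icls (Pic S)"
proof (rule PG.subgroupI)
  show "Icls \<subseteq> carrier (Pic S)" using Icls_PicInv by (auto simp: PicInv_iff)
  have "(\<lambda>v. 0) \<in> TDivInv S W" by (simp add: TDivInv_iff TDiv_carrier act_zero)
  then show "Icls \<noteq> {}" by blast
next
  fix a assume "a \<in> Icls"
  then obtain E where E: "E \<in> TDivInv S W" "a = cls S E" by blast
  have m: "(\<lambda>v. - E v) \<in> TDivInv S W" using E(1) by (simp add: TDivInv_iff TDiv_carrier act_neg)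
  have e: "inv\<^bsub>Pic S\<^esub> a = cls S (\<lambda>v. - E v)" using E cls_inv by (simp add: TDivInv_iff)
  show "inv\<^bsub>Pic S\<^esub> a \<in> Icls" by (rule image_eqI[where f="cls S", OF e m])
next
  fix a b assume "a \<in> Icls" "b \<in> Icls"
  then obtain E1 E2 where E: "E1 \<in> TDivInv S W" "a = cls S E1" "E2 \<in> TDivInv S W" "b = cls S E2" by blast
  have m: "(\<lambda>v. E1 v + E2 v) \<in> TDivInv S W" using E(1,3) by (simp add: TDivInv_iff TDiv_carrier act_add)
  have e: "a \<otimes>\<^bsub>Pic S\<^esub> b = cls S (\<lambda>v. E1 v + E2 v)" using E cls_mult by (simp add: TDivInv_iff)
  show "a \<otimes>\<^bsub>Pic S\<^esub> b \<in> Icls" by (rule image_eqI[where f="cls S", OF e m])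
qed

lemma Icls_subgroup: "subgroup Icls PIG"
  unfolding PicInvGrp_def by (rule PG.subgroup_incl[OF Icls_subgroup_Pic PicInv_subgroup Icls_PicInv])

lemma Icls_normal: "Icls \<lhd> PIG"
  by (rule PIGg.subgroup_imp_normal[OF Icls_subgroup])

lemma Coker_group: "group (Coker S J)"
  unfolding Coker_def by (rule normal.factorgroup_is_group[OF Icls_normal])

lemma rcos_PIG: "Icls #>\<^bsub>PIG\<^esub> x = Icls #>\<^bsub>Pic S\<^esub> x"
  by (simp add: r_coset_def PicInvGrp_def)

lemma solves_PicInv: assumes "f \<in> Z1 W" "solves f D" shows "cls S D \<in> PicInv S J"
proof (rule PicInv_W)
  have D: "D \<in> carrier (TDiv S)" using assms(2) by (simp add: solves_def)
  show "cls S D \<in> carrier (Pic S)" by (rule cls_carrier[OF D])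
  show "\<forall>g\<in>W. picact S g (cls S D) = cls S D"
  proof
    fix g assume g: "g \<in> W"
    have e: "act g D = (\<lambda>v. divm S (f g) v + D v)"
      using assms(2) g unfolding solves_def by (simp add: fun_eq_iff)
    have "\<exists>m\<in>charlat. act g D = (\<lambda>v. divm S m v + D v)"
      using e Z1_charlat[OF assms(1) g] by (intro bexI[of _ "f g"])
    then have "cls S (act g D) = cls S D"
      using cls_eq_iff[OF act_TDiv[OF W_aut[OF g] D] D] by simp
    then show "picact S g (cls S D) = cls S D" using picact_cls[OF W_aut[OF g] D] by simp
  qed
qed

lemma solves_coset:
  assumes "f \<in> Z1 W" "solves f D" "solves f D'"
  shows "Icls #>\<^bsub>PIG\<^esub> cls S D = Icls #>\<^bsub>PIG\<^esub> cls S D'"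
proof -
  have D: "D \<in> carrier (TDiv S)" and D': "D' \<in> carrier (TDiv S)" using assms(2,3) by (simp_all add: solves_def)
  define E where "E = (\<lambda>v. D v - D' v)"
  have Ec: "E \<in> carrier (TDiv S)" using D D' by (simp add: E_def TDiv_carrier)
  have "\<forall>g\<in>W. act g E = E"
  proof
    fix g assume g: "g \<in> W"
    have "(\<lambda>v. act g D v - D v) = (\<lambda>v. act g D' v - D' v)"
      using assms(2,3) g unfolding solves_def by simp
    then show "act g E = E" unfolding E_def act_diff by (simp add: fun_eq_iff algebra_simps)
  qed
  then have EI: "E \<in> TDivInv S W" using Ec by (simp add: TDivInv_iff)
  have "cls S D = cls S E \<otimes>\<^bsub>Pic S\<^esub> cls S D'" using cls_mult[OF Ec D'] by (simp add: E_def)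
  moreover have "cls S E \<in> Icls" using EI by (rule imageI)
  ultimately have "cls S D \<in> Icls #>\<^bsub>PIG\<^esub> cls S D'" unfolding rcos_PIG r_coset_def by (intro UN_I) (simp_all add: PicInvGrp_def)
  then have "Icls #>\<^bsub>PIG\<^esub> cls S D' = Icls #>\<^bsub>PIG\<^esub> cls S D"
    by (rule PIGg.repr_independence) (simp_all add: PIG_simps solves_PicInv[OF assms(1,3)] Icls_subgroup)
  then show ?thesis by simp
qed


lemma Z1grp_simps: "carrier (Z1grp W) = Z1 W"
  "monoid.mult (Z1grp W) = (\<lambda>f f'. \<lambda>g\<in>W. \<lambda>v. f g v + f' g v)"
  "monoid.one (Z1grp W) = (\<lambda>g\<in>W. \<lambda>v. 0)"
  by (simp_all add: Z1grp_def)

lemma Z1_ext: "f \<in> Z1 W \<Longrightarrow> f \<in> extensional W"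
  by (simp add: Z1_iff PiE_iff)

lemma Z1_add: assumes "f1 \<in> Z1 W" "f2 \<in> Z1 W" shows "(\<lambda>g\<in>W. \<lambda>v. f1 g v + f2 g v) \<in> Z1 W"
  unfolding Z1_iff
proof (intro conjI ballI)
  show "(\<lambda>g\<in>W. \<lambda>v. f1 g v + f2 g v) \<in> W \<rightarrow>\<^sub>E charlat"
    using assms by (simp add: restrict_PiE_iff charlat_add Z1_charlat)
  fix g h assume g: "g \<in> W" and h: "h \<in> W"
  show "(\<lambda>g\<in>W. \<lambda>v. f1 g v + f2 g v) (g \<circ> h) =
      (\<lambda>v. (\<lambda>g\<in>W. \<lambda>v. f1 g v + f2 g v) g v + act g ((\<lambda>g\<in>W. \<lambda>v. f1 g v + f2 g v) h) v)"
    using g h W_comp[OF g h] Z1_coc[OF assms(1) g h] Z1_coc[OF assms(2) g h]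
    by (simp add: act_add fun_eq_iff)
qed

lemma Z1_zero: "(\<lambda>g\<in>W. \<lambda>v. 0) \<in> Z1 W"
  unfolding Z1_iff using W_comp by (simp add: restrict_PiE_iff charlat_zero act_zero)

lemma Z1_neg: assumes "f \<in> Z1 W" shows "(\<lambda>g\<in>W. \<lambda>v. - f g v) \<in> Z1 W"
  unfolding Z1_iff
proof (intro conjI ballI)
  show "(\<lambda>g\<in>W. \<lambda>v. - f g v) \<in> W \<rightarrow>\<^sub>E charlat"
    using assms by (simp add: restrict_PiE_iff charlat_neg Z1_charlat)
  fix g h assume g: "g \<in> W" and h: "h \<in> W"
  show "(\<lambda>g\<in>W. \<lambda>v. - f g v) (g \<circ> h) = (\<lambda>v. (\<lambda>g\<in>W. \<lambda>v. - f g v) g v + act g ((\<lambda>g\<in>W. \<lambda>v. - f g v) h) v)"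
    using g h W_comp[OF g h] Z1_coc[OF assms g h] by (simp add: act_neg fun_eq_iff)
qed

lemma Z1grp_cg: "comm_group (Z1grp W)"
proof (rule comm_groupI)
  fix x y assume "x \<in> carrier (Z1grp W)" "y \<in> carrier (Z1grp W)"
  then show "x \<otimes>\<^bsub>Z1grp W\<^esub> y \<in> carrier (Z1grp W)" by (simp add: Z1grp_simps Z1_add)
next
  show "\<one>\<^bsub>Z1grp W\<^esub> \<in> carrier (Z1grp W)" by (simp add: Z1grp_simps Z1_zero)
next
  fix x y z assume "x \<in> carrier (Z1grp W)" "y \<in> carrier (Z1grp W)" "z \<in> carrier (Z1grp W)"
  show "x \<otimes>\<^bsub>Z1grp W\<^esub> y \<otimes>\<^bsub>Z1grp W\<^esub> z = x \<otimes>\<^bsub>Z1grp W\<^esub> (y \<otimes>\<^bsub>Z1grp W\<^esub> z)"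
    unfolding Z1grp_simps by (intro restrict_ext ext) (simp add: add_ac)
next
  fix x y assume "x \<in> carrier (Z1grp W)" "y \<in> carrier (Z1grp W)"
  show "x \<otimes>\<^bsub>Z1grp W\<^esub> y = y \<otimes>\<^bsub>Z1grp W\<^esub> x"
    by (simp add: Z1grp_simps add_ac)
next
  fix x assume x: "x \<in> carrier (Z1grp W)"
  show "\<one>\<^bsub>Z1grp W\<^esub> \<otimes>\<^bsub>Z1grp W\<^esub> x = x"
  proof (rule extensionalityI)
    show "\<one>\<^bsub>Z1grp W\<^esub> \<otimes>\<^bsub>Z1grp W\<^esub> x \<in> extensional W" by (simp add: Z1grp_simps)
    show "x \<in> extensional W" using x Z1_ext by (simp add: Z1grp_simps)
    fix g assume "g \<in> W"
    then show "(\<one>\<^bsub>Z1grp W\<^esub> \<otimes>\<^bsub>Z1grp W\<^esub> x) g = x g" by (simp add: Z1grp_simps)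
  qed
next
  fix x assume x: "x \<in> carrier (Z1grp W)"
  show "\<exists>y\<in>carrier (Z1grp W). y \<otimes>\<^bsub>Z1grp W\<^esub> x = \<one>\<^bsub>Z1grp W\<^esub>"
  proof
    show "(\<lambda>g\<in>W. \<lambda>v. - x g v) \<in> carrier (Z1grp W)" using x Z1_neg by (simp add: Z1grp_simps)
    show "(\<lambda>g\<in>W. \<lambda>v. - x g v) \<otimes>\<^bsub>Z1grp W\<^esub> x = \<one>\<^bsub>Z1grp W\<^esub>"
      by (simp add: Z1grp_simps cong: restrict_cong)
  qed
qed

interpretation Z1G: comm_group "Z1grp W" by (rule Z1grp_cg)

definition cob :: "(int ^ 'n \<Rightarrow> int) \<Rightarrow> (int ^ 'n \<Rightarrow> int ^ 'n) \<Rightarrow> (int ^ 'n \<Rightarrow> int)" where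
  "cob m = (\<lambda>g\<in>W. \<lambda>v. act g m v - m v)"

lemma B1_iff: "f \<in> B1 W \<longleftrightarrow> (\<exists>m\<in>charlat. f = cob m)"
  unfolding B1_def cob_def by blast

lemma cob_Z1: assumes "m \<in> charlat" shows "cob m \<in> Z1 W"
  unfolding Z1_iff
proof (intro conjI ballI)
  show "cob m \<in> W \<rightarrow>\<^sub>E charlat"
    unfolding cob_def using assms W_aut by (simp add: restrict_PiE_iff charlat_diff act_charlat)
  fix g h assume g: "g \<in> W" and h: "h \<in> W"
  have "act (g \<circ> h) m = act g (act h m)" by (rule act_comp[OF aut_bij[OF W_aut[OF g]] aut_bij[OF W_aut[OF h]]])
  then show "cob m (g \<circ> h) = (\<lambda>v. cob m g v + act g (cob m h) v)"
    unfolding cob_def using g h W_comp[OF g h] by (simp add: act_diff fun_eq_iff)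
qed

lemma cob_mult: "m1 \<in> charlat \<Longrightarrow> m2 \<in> charlat \<Longrightarrow>
    cob m1 \<otimes>\<^bsub>Z1grp W\<^esub> cob m2 = cob (\<lambda>x. m1 x + m2 x)"
  unfolding cob_def Z1grp_simps by (intro restrict_ext ext) (simp add: act_add)

lemma B1_subgroup: "subgroup (B1 W) (Z1grp W)"
proof (rule Z1G.subgroupI)
  show "B1 W \<subseteq> carrier (Z1grp W)" using cob_Z1 by (auto simp: B1_iff Z1grp_simps)
  show "B1 W \<noteq> {}" using charlat_zero B1_iff by blast
next
  fix a assume "a \<in> B1 W"
  then obtain m where m: "m \<in> charlat" "a = cob m" by (auto simp: B1_iff)
  have "inv\<^bsub>Z1grp W\<^esub> a = cob (\<lambda>x. - m x)"
  proof (rule Z1G.inv_equality)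
    show "cob (\<lambda>x. - m x) \<otimes>\<^bsub>Z1grp W\<^esub> a = \<one>\<^bsub>Z1grp W\<^esub>"
      using m cob_mult[OF charlat_neg[OF m(1)] m(1)] by (simp add: cob_def Z1grp_simps act_zero)
    show "a \<in> carrier (Z1grp W)" using m cob_Z1 by (simp add: Z1grp_simps)
    show "cob (\<lambda>x. - m x) \<in> carrier (Z1grp W)" using cob_Z1[OF charlat_neg[OF m(1)]] by (simp add: Z1grp_simps)
  qed
  then show "inv\<^bsub>Z1grp W\<^esub> a \<in> B1 W" using charlat_neg[OF m(1)] B1_iff by blast
next
  fix a b assume "a \<in> B1 W" "b \<in> B1 W"
  then obtain m1 m2 where m: "m1 \<in> charlat" "a = cob m1" "m2 \<in> charlat" "b = cob m2" by (auto simp: B1_iff)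
  then have "a \<otimes>\<^bsub>Z1grp W\<^esub> b = cob (\<lambda>x. m1 x + m2 x)" using cob_mult by simp
  then show "a \<otimes>\<^bsub>Z1grp W\<^esub> b \<in> B1 W" using charlat_add[OF m(1,3)] B1_iff by blast
qed


section \<open>The first isomorphism\<close>

definition Dsel :: "((int ^ 'n \<Rightarrow> int ^ 'n) \<Rightarrow> (int ^ 'n \<Rightarrow> int)) \<Rightarrow> (int ^ 'n \<Rightarrow> int)" where
  "Dsel f = (SOME D. solves f D)"

definition hmap :: "((int ^ 'n \<Rightarrow> int ^ 'n) \<Rightarrow> (int ^ 'n \<Rightarrow> int)) \<Rightarrow> (int ^ 'n \<Rightarrow> int) set set" where
  "hmap f = Icls #>\<^bsub>PIG\<^esub> cls S (Dsel f)"

lemma Dsel: "f \<in> Z1 W \<Longrightarrow> solves f (Dsel f)"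
  unfolding Dsel_def using cob_exists by (rule someI_ex)

lemma hmap_solves: "f \<in> Z1 W \<Longrightarrow> solves f D \<Longrightarrow> hmap f = Icls #>\<^bsub>PIG\<^esub> cls S D"
  unfolding hmap_def using solves_coset Dsel by blast

lemma solves_add: assumes "solves f1 D1" "solves f2 D2"
  shows "solves (\<lambda>g\<in>W. \<lambda>v. f1 g v + f2 g v) (\<lambda>v. D1 v + D2 v)"
  unfolding solves_def
proof (intro conjI ballI)
  show "(\<lambda>v. D1 v + D2 v) \<in> carrier (TDiv S)" using assms by (simp add: solves_def TDiv_carrier)
  fix g assume g: "g \<in> W"
  have "divm S (f1 g) = (\<lambda>v. act g D1 v - D1 v)" "divm S (f2 g) = (\<lambda>v. act g D2 v - D2 v)"
    using assms g by (simp_all add: solves_def)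
  then show "divm S ((\<lambda>g\<in>W. \<lambda>v. f1 g v + f2 g v) g) = (\<lambda>v. act g (\<lambda>v. D1 v + D2 v) v - (D1 v + D2 v))"
    using g by (simp add: divm_add act_add fun_eq_iff)
qed

lemma Coker_simps: "carrier (Coker S J) = rcosets\<^bsub>PIG\<^esub> Icls"
  "monoid.mult (Coker S J) = set_mult PIG" "monoid.one (Coker S J) = Icls"
  by (simp_all add: Coker_def FactGroup_def)

lemma hmap_carrier: assumes "f \<in> Z1 W" shows "hmap f \<in> carrier (Coker S J)"
proof -
  have "cls S (Dsel f) \<in> carrier PIG" using solves_PicInv[OF assms Dsel[OF assms]] by (simp add: PIG_simps)
  then show ?thesis unfolding Coker_simps hmap_def RCOSETS_def by blast
qed

lemma hmap_hom: "hmap \<in> hom (Z1grp W) (Coker S J)"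
  unfolding hom_def
proof (intro CollectI conjI ballI)
  show "hmap \<in> carrier (Z1grp W) \<rightarrow> carrier (Coker S J)" using hmap_carrier by (simp add: Z1grp_simps)
  fix f1 f2 assume f1: "f1 \<in> carrier (Z1grp W)" and f2: "f2 \<in> carrier (Z1grp W)"
  have z1: "f1 \<in> Z1 W" and z2: "f2 \<in> Z1 W" using f1 f2 by (simp_all add: Z1grp_simps)
  let ?D1 = "Dsel f1" and ?D2 = "Dsel f2"
  have s1: "solves f1 ?D1" and s2: "solves f2 ?D2" using Dsel z1 z2 by blast+
  have D1: "?D1 \<in> carrier (TDiv S)" and D2: "?D2 \<in> carrier (TDiv S)" using s1 s2 by (simp_all add: solves_def)
  have c1: "cls S ?D1 \<in> carrier PIG" and c2: "cls S ?D2 \<in> carrier PIG"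
    using solves_PicInv[OF z1 s1] solves_PicInv[OF z2 s2] by (simp_all add: PIG_simps)
  have "f1 \<otimes>\<^bsub>Z1grp W\<^esub> f2 = (\<lambda>g\<in>W. \<lambda>v. f1 g v + f2 g v)" by (simp add: Z1grp_simps)
  moreover have "(\<lambda>g\<in>W. \<lambda>v. f1 g v + f2 g v) \<in> Z1 W" by (rule Z1_add[OF z1 z2])
  ultimately have "hmap (f1 \<otimes>\<^bsub>Z1grp W\<^esub> f2) = Icls #>\<^bsub>PIG\<^esub> cls S (\<lambda>v. ?D1 v + ?D2 v)"
    using hmap_solves solves_add[OF s1 s2] by simp
  also have "cls S (\<lambda>v. ?D1 v + ?D2 v) = cls S ?D1 \<otimes>\<^bsub>PIG\<^esub> cls S ?D2"
    using cls_mult[OF D1 D2] by (simp add: PIG_simps)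
  also have "Icls #>\<^bsub>PIG\<^esub> (cls S ?D1 \<otimes>\<^bsub>PIG\<^esub> cls S ?D2) = (Icls #>\<^bsub>PIG\<^esub> cls S ?D1) <#>\<^bsub>PIG\<^esub> (Icls #>\<^bsub>PIG\<^esub> cls S ?D2)"
    by (rule normal.rcos_sum[OF Icls_normal c1 c2, symmetric])
  finally show "hmap (f1 \<otimes>\<^bsub>Z1grp W\<^esub> f2) = hmap f1 \<otimes>\<^bsub>Coker S J\<^esub> hmap f2"
    unfolding Coker_simps hmap_def .
qed

lemma hmap_group_hom: "group_hom (Z1grp W) (Coker S J) hmap"
  unfolding group_hom_def group_hom_axioms_def
  using Z1G.is_group Coker_group hmap_hom by simp

lemma hmap_surj: "hmap ` carrier (Z1grp W) = carrier (Coker S J)"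
proof
  show "hmap ` carrier (Z1grp W) \<subseteq> carrier (Coker S J)" using hmap_carrier by (auto simp: Z1grp_simps)
  show "carrier (Coker S J) \<subseteq> hmap ` carrier (Z1grp W)"
  proof
    fix Xc assume "Xc \<in> carrier (Coker S J)"
    then obtain C where C: "C \<in> PicInv S J" "Xc = Icls #>\<^bsub>PIG\<^esub> C"
      unfolding Coker_simps RCOSETS_def by (auto simp: PIG_simps)
    then obtain D0 where D0: "D0 \<in> carrier (TDiv S)" "C = cls S D0" using Pic_carrier by (auto simp: PicInv_iff)
    have ex: "\<forall>g\<in>W. \<exists>!m. m \<in> charlat \<and> divm S m = (\<lambda>v. act g D0 v - D0 v)"
    proof
      fix g assume g: "g \<in> W"
      have "cls S (act g D0) = cls S D0"
        using picact_cls[OF W_aut[OF g] D0(1)] PicInv_picact[OF C(1) g] D0(2) by simp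
      then obtain m where m: "m \<in> charlat" "act g D0 = (\<lambda>v. divm S m v + D0 v)"
        using cls_eq_iff[OF act_TDiv[OF W_aut[OF g] D0(1)] D0(1)] by blast
      have "divm S m = (\<lambda>v. act g D0 v - D0 v)" using m(2) by (simp add: fun_eq_iff)
      then show "\<exists>!m. m \<in> charlat \<and> divm S m = (\<lambda>v. act g D0 v - D0 v)"
        using m(1) divm_inj by (intro ex1I[of _ m]) auto
    qed
    define f where "f = (\<lambda>g\<in>W. THE m. m \<in> charlat \<and> divm S m = (\<lambda>v. act g D0 v - D0 v))"
    have fprop: "f g \<in> charlat \<and> divm S (f g) = (\<lambda>v. act g D0 v - D0 v)" if g: "g \<in> W" for g
    proof -
      have "\<exists>!m. m \<in> charlat \<and> divm S m = (\<lambda>v. act g D0 v - D0 v)" by (rule bspec[OF ex g])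
      then have "(THE m. m \<in> charlat \<and> divm S m = (\<lambda>v. act g D0 v - D0 v)) \<in> charlat \<and>
          divm S (THE m. m \<in> charlat \<and> divm S m = (\<lambda>v. act g D0 v - D0 v)) = (\<lambda>v. act g D0 v - D0 v)"
        by (rule theI')
      then show ?thesis using g unfolding f_def by simp
    qed
    have fZ: "f \<in> Z1 W"
      unfolding Z1_iff
    proof (intro conjI ballI)
      show "f \<in> W \<rightarrow>\<^sub>E charlat" unfolding f_def using fprop by (simp add: restrict_PiE_iff f_def)
      fix g h assume g: "g \<in> W" and h: "h \<in> W"
      have gh: "g \<circ> h \<in> W" by (rule W_comp[OF g h])
      have c1: "(\<lambda>v. f g v + act g (f h) v) \<in> charlat"
        using fprop[OF g] fprop[OF h] act_charlat[OF W_aut[OF g]] charlat_add by blast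
      have "divm S (\<lambda>v. f g v + act g (f h) v) = (\<lambda>v. divm S (f g) v + divm S (act g (f h)) v)"
        by (rule divm_add)
      also have "divm S (act g (f h)) = act g (divm S (f h))" by (rule act_divm[OF W_aut[OF g], symmetric])
      also have "(\<lambda>v. divm S (f g) v + act g (divm S (f h)) v) = (\<lambda>v. act (g \<circ> h) D0 v - D0 v)"
      proof -
        have e1: "divm S (f g) = (\<lambda>v. act g D0 v - D0 v)" using fprop[OF g] by simp
        have e2: "divm S (f h) = (\<lambda>v. act h D0 v - D0 v)" using fprop[OF h] by simp
        have ac: "act (g \<circ> h) D0 = act g (act h D0)"
          by (rule act_comp[OF aut_bij[OF W_aut[OF g]] aut_bij[OF W_aut[OF h]]])
        show ?thesis unfolding e1 e2 act_diff ac by (simp add: fun_eq_iff)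
      qed
      also have "\<dots> = divm S (f (g \<circ> h))" using fprop[OF gh] by simp
      finally show "f (g \<circ> h) = (\<lambda>v. f g v + act g (f h) v)"
        using divm_inj[OF _ c1] fprop[OF gh] by metis
    qed
    have "solves f D0" unfolding solves_def using D0(1) fprop by simp
    then have "hmap f = Xc" using hmap_solves[OF fZ] C(2) D0(2) by simp
    then show "Xc \<in> hmap ` carrier (Z1grp W)" using fZ by (auto simp: Z1grp_simps)
  qed
qed

lemma hmap_kernel: "kernel (Z1grp W) (Coker S J) hmap = B1 W"
proof
  show "kernel (Z1grp W) (Coker S J) hmap \<subseteq> B1 W"
  proof
    fix f assume "f \<in> kernel (Z1grp W) (Coker S J) hmap"
    then have fZ: "f \<in> Z1 W" and hf: "hmap f = Icls" by (simp_all add: kernel_def Z1grp_simps Coker_simps)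
    let ?D = "Dsel f"
    have s: "solves f ?D" by (rule Dsel[OF fZ])
    have D: "?D \<in> carrier (TDiv S)" using s by (simp add: solves_def)
    have "cls S ?D \<in> Icls #>\<^bsub>PIG\<^esub> cls S ?D"
      by (rule PIGg.rcos_self) (simp_all add: PIG_simps solves_PicInv[OF fZ s] Icls_subgroup)
    then have "cls S ?D \<in> Icls" using hf unfolding hmap_def by simp
    then obtain E where E: "E \<in> TDivInv S W" "cls S ?D = cls S E" by blast
    then obtain m where m: "m \<in> charlat" "?D = (\<lambda>v. divm S m v + E v)"
      using cls_eq_iff[OF D] by (auto simp: TDivInv_iff)
    have "\<forall>g\<in>W. f g = (\<lambda>v. act g m v - m v)"
    proof
      fix g assume g: "g \<in> W"
      have "divm S (f g) = (\<lambda>v. act g ?D v - ?D v)" using s g by (simp add: solves_def)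
      also have "\<dots> = (\<lambda>v. act g (divm S m) v - divm S m v)"
        using m(2) E(1) g by (simp add: act_add TDivInv_iff)
      also have "\<dots> = divm S (\<lambda>v. act g m v - m v)" using act_divm[OF W_aut[OF g]] by (simp add: divm_diff)
      finally show "f g = (\<lambda>v. act g m v - m v)"
        using divm_inj Z1_charlat[OF fZ g] charlat_diff[OF act_charlat[OF W_aut[OF g] m(1)] m(1)] by blast
    qed
    then have "f = cob m" unfolding cob_def using Z1_ext[OF fZ]
      by (intro extensionalityI[where A = W]) simp_all
    then show "f \<in> B1 W" using m(1) B1_iff by blast
  qed
  show "B1 W \<subseteq> kernel (Z1grp W) (Coker S J) hmap"
  proof
    fix f assume "f \<in> B1 W"
    then obtain m where m: "m \<in> charlat" "f = cob m" by (auto simp: B1_iff)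
    have fZ: "f \<in> Z1 W" using cob_Z1 m by simp
    have "solves f (divm S m)"
      unfolding solves_def using m act_divm[OF W_aut] by (simp add: divm_carrier cob_def divm_diff)
    then have "hmap f = Icls #>\<^bsub>PIG\<^esub> cls S (divm S m)" by (rule hmap_solves[OF fZ])
    also have "cls S (divm S m) = \<one>\<^bsub>PIG\<^esub>"
    proof -
      have "cls S (divm S m) = cls S (\<lambda>v. 0)"
        using cls_eq_iff[OF divm_carrier, of "\<lambda>v. 0"] m(1) by (auto simp: TDiv_carrier)
      then show ?thesis by (simp add: PIG_simps Pic_one)
    qed
    also have "Icls #>\<^bsub>PIG\<^esub> \<one>\<^bsub>PIG\<^esub> = Icls"
      by (rule PIGg.coset_mult_one) (simp add: PIG_simps Icls_PicInv)
    finally show "f \<in> kernel (Z1grp W) (Coker S J) hmap"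
      using fZ by (simp add: kernel_def Z1grp_simps Coker_simps)
  qed
qed

theorem first_iso: "H1 W \<cong> Coker S J"
proof -
  have "Z1grp W Mod kernel (Z1grp W) (Coker S J) hmap \<cong> Coker S J"
    by (rule group_hom.FactGroup_iso[OF hmap_group_hom hmap_surj])
  then show ?thesis unfolding H1_def hmap_kernel .
qed

end


section \<open>The reflection lemma\<close>

context toric
begin

lemma facet_swap:
  fixes m :: "int ^ 'n \<Rightarrow> int"
  assumes madd: "additive_map m" and m1: "m \<rho> = 1" and m2: "m \<rho>' = -1"
    and m0: "\<forall>v\<in>rays S. v \<noteq> \<rho> \<longrightarrow> v \<noteq> \<rho>' \<longrightarrow> m v = 0"
    and k: "\<kappa> \<in> S" "\<rho> \<in> \<kappa>" "\<rho>' \<notin> \<kappa>" "\<rho>' \<in> rays S"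
  shows "insert \<rho>' (\<kappa> - {\<rho>}) \<in> S"
proof -
  define \<tau> where "\<tau> = \<kappa> - {\<rho>}"
  have tS: "\<tau> \<in> S" unfolding \<tau>_def by (rule faces[OF k(1)]) blast
  have tfin: "finite \<tau>" by (rule cone_finite[OF tS])
  have trays: "\<tau> \<subseteq> rays S" by (rule cone_rays[OF tS])
  have neq: "\<rho> \<noteq> \<rho>'" using m1 m2 by auto
  have rt: "\<rho>' \<notin> \<tau>" using k(3) unfolding \<tau>_def by blast
  have mt: "\<forall>u\<in>\<tau>. m u = 0" using m0 trays k(3) unfolding \<tau>_def by blast
  define p :: "real ^ 'n" where "p = (\<chi> i. (\<Sum>u\<in>\<tau>. real_of_int (u $ i)) + real_of_int (\<rho>' $ i))"
  obtain \<sigma> where s: "\<sigma> \<in> S" "in_cone \<sigma> p" using complete by blast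
  then obtain a where a0: "\<forall>v\<in>\<sigma>. a v \<ge> 0" and ap: "\<forall>i. p $ i = (\<Sum>v\<in>\<sigma>. a v * real_of_int (v $ i))"
    unfolding in_cone_def by blast
  have sfin: "finite \<sigma>" by (rule cone_finite[OF s(1)])
  have srays: "\<sigma> \<subseteq> rays S" by (rule cone_rays[OF s(1)])
  have p2: "\<forall>i. p $ i = (\<Sum>v\<in>insert \<rho>' \<tau>. 1 * real_of_int (v $ i))"
    using tfin rt unfolding p_def by simp
  have "lin_ext m p = (\<Sum>v\<in>insert \<rho>' \<tau>. 1 * real_of_int (m v))"
    by (rule lin_ext_comb[OF madd _ p2]) (simp add: tfin)
  also have "\<dots> = -1" using tfin rt mt m2 by simp
  finally have L1: "lin_ext m p = -1" .
  have "lin_ext m p = (\<Sum>v\<in>\<sigma>. a v * real_of_int (m v))" by (rule lin_ext_comb[OF madd sfin ap])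
  also have "\<dots> = (\<Sum>v\<in>\<sigma>. a v * (if v = \<rho> then 1 else 0) - a v * (if v = \<rho>' then 1 else 0))"
  proof (rule sum.cong[OF refl])
    fix v assume "v \<in> \<sigma>"
    then have "v \<in> rays S" using srays by blast
    then show "a v * real_of_int (m v) = a v * (if v = \<rho> then 1 else 0) - a v * (if v = \<rho>' then 1 else 0)"
      using m0 m1 m2 neq by auto
  qed
  also have "\<dots> = (\<Sum>v\<in>\<sigma>. a v * (if v = \<rho> then 1 else 0)) - (\<Sum>v\<in>\<sigma>. a v * (if v = \<rho>' then 1 else 0))"
    by (rule sum_subtractf)
  also have "\<dots> = (if \<rho> \<in> \<sigma> then a \<rho> else 0) - (if \<rho>' \<in> \<sigma> then a \<rho>' else 0)"
  proof -
    have d: "(\<Sum>v\<in>\<sigma>. a v * (if v = w then 1 else 0)) = (if w \<in> \<sigma> then a w else 0)" for w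
    proof -
      have "(\<Sum>v\<in>\<sigma>. a v * (if v = w then 1 else 0)) = (\<Sum>v\<in>\<sigma>. (if v = w then a w else 0))"
        by (intro sum.cong) simp_all
      also have "\<dots> = (if w \<in> \<sigma> then a w else 0)" using sfin by (simp add: sum.delta')
      finally show ?thesis .
    qed
    show ?thesis by (simp only: d)
  qed
  finally have L2: "lin_ext m p = (if \<rho> \<in> \<sigma> then a \<rho> else 0) - (if \<rho>' \<in> \<sigma> then a \<rho>' else 0)" .
  have A: "(if \<rho> \<in> \<sigma> then a \<rho> else 0) \<ge> 0" using a0 by simp
  have rs: "\<rho>' \<in> \<sigma>" and ar: "a \<rho>' \<ge> 1"
  proof -
    have "(if \<rho>' \<in> \<sigma> then a \<rho>' else 0) \<ge> 1" using L1 L2 A by linarith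
    then show "\<rho>' \<in> \<sigma>" "a \<rho>' \<ge> 1" by (simp_all split: if_splits)
  qed
  define y :: "real ^ 'n" where "y = (\<chi> i. (\<Sum>u\<in>\<tau>. real_of_int (u $ i)))"
  define a' where "a' = (\<lambda>v. a v - (if v = \<rho>' then 1 else 0))"
  have "in_cone \<sigma> y" unfolding in_cone_def
  proof (intro exI conjI allI ballI)
    fix v assume "v \<in> \<sigma>" then show "0 \<le> a' v" using a0 ar unfolding a'_def by auto
  next
    fix i
    have "(\<Sum>v\<in>\<sigma>. a' v * real_of_int (v $ i)) =
        (\<Sum>v\<in>\<sigma>. a v * real_of_int (v $ i)) - (\<Sum>v\<in>\<sigma>. (if v = \<rho>' then real_of_int (v $ i) else 0))"
    proof -
      have "(\<Sum>v\<in>\<sigma>. a' v * real_of_int (v $ i)) =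
          (\<Sum>v\<in>\<sigma>. a v * real_of_int (v $ i) - (if v = \<rho>' then real_of_int (v $ i) else 0))"
        by (intro sum.cong) (auto simp: a'_def algebra_simps)
      also have "\<dots> = (\<Sum>v\<in>\<sigma>. a v * real_of_int (v $ i)) - (\<Sum>v\<in>\<sigma>. (if v = \<rho>' then real_of_int (v $ i) else 0))"
        by (rule sum_subtractf)
      finally show ?thesis .
    qed
    also have "\<dots> = p $ i - real_of_int (\<rho>' $ i)" using ap sfin rs by (simp add: sum.delta sum.delta')
    also have "\<dots> = y $ i" unfolding p_def y_def by simp
    finally show "y $ i = (\<Sum>v\<in>\<sigma>. a' v * real_of_int (v $ i))" by simp
  qed
  moreover have "in_cone \<tau> y" unfolding in_cone_def y_def
    by (intro exI[of _ "\<lambda>v. 1"]) simp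
  ultimately have "in_cone (\<sigma> \<inter> \<tau>) y" by (rule fanint[OF s(1) tS])
  then obtain b where bp: "\<forall>i. y $ i = (\<Sum>v\<in>\<sigma> \<inter> \<tau>. b v * real_of_int (v $ i))"
    unfolding in_cone_def by blast
  have "\<tau> \<subseteq> \<sigma>"
  proof
    fix u assume u: "u \<in> \<tau>"
    have eq: "\<forall>i. (\<Sum>v\<in>\<tau>. (if v \<in> \<sigma> then b v else 0) * real_of_int (v $ i)) =
        (\<Sum>v\<in>\<tau>. 1 * real_of_int (v $ i))"
    proof
      fix i
      have "(\<Sum>v\<in>\<tau>. (if v \<in> \<sigma> then b v else 0) * real_of_int (v $ i)) =
          (\<Sum>v\<in>\<tau>. (if v \<in> \<sigma> then b v * real_of_int (v $ i) else 0))"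
        by (intro sum.cong) simp_all
      also have "\<dots> = (\<Sum>v\<in>\<tau> \<inter> \<sigma>. b v * real_of_int (v $ i))"
        using tfin by (simp add: sum.inter_restrict)
      also have "\<dots> = y $ i" using bp by (simp add: Int_commute)
      also have "\<dots> = (\<Sum>v\<in>\<tau>. 1 * real_of_int (v $ i))" unfolding y_def by simp
      finally show "(\<Sum>v\<in>\<tau>. (if v \<in> \<sigma> then b v else 0) * real_of_int (v $ i)) =
        (\<Sum>v\<in>\<tau>. 1 * real_of_int (v $ i))" .
    qed
    have "(if u \<in> \<sigma> then b u else 0) = (1::real)" by (rule cone_indep[OF tS eq u])
    then show "u \<in> \<sigma>" by (simp split: if_splits)
  qed
  then have "insert \<rho>' \<tau> \<subseteq> \<sigma>" using rs by blast
  then show ?thesis using faces[OF s(1)] unfolding \<tau>_def by blast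
qed

end


context toricJ
begin

interpretation TD: comm_group "TDiv S" by (rule TDiv_cg)
interpretation PG: comm_group "Pic S" by (rule Pic_cg)

lemma pd_carrier: "\<rho> \<in> rays S \<Longrightarrow> prime_div \<rho> \<in> carrier (TDiv S)"
  unfolding TDiv_carrier prime_div_def by auto

lemma act_pd: assumes "bij g" shows "act g (prime_div \<rho>) = prime_div (g \<rho>)"
proof
  fix v
  have "hinv g v = \<rho> \<longleftrightarrow> v = g \<rho>"
  proof
    assume "hinv g v = \<rho>"
    then have "g (hinv g v) = g \<rho>" by simp
    then show "v = g \<rho>" using assms by (simp add: bij_is_surj surj_f_inv_f)
  next
    assume "v = g \<rho>"
    then show "hinv g v = \<rho>" using assms by (simp add: bij_is_inj inv_f_f)
  qed
  then show "act g (prime_div \<rho>) v = prime_div (g \<rho>) v" unfolding act_def prime_div_def by simp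
qed

lemma reflection:
  assumes r1: "\<rho>1 \<in> rays S" and r2: "\<rho>2 \<in> rays S" and ne: "\<rho>1 \<noteq> \<rho>2"
    and ceq: "cls S (prime_div \<rho>1) = cls S (prime_div \<rho>2)"
  shows "\<exists>s\<in>W. s \<rho>1 = \<rho>2"
proof -
  obtain m where mc: "m \<in> charlat" and meq: "prime_div \<rho>1 = (\<lambda>v. divm S m v + prime_div \<rho>2 v)"
    using cls_eq_iff[OF pd_carrier[OF r1] pd_carrier[OF r2]] ceq by blast
  have madd: "additive_map m" using mc by (simp add: charlat_iff)
  have mv: "m v = prime_div \<rho>1 v - prime_div \<rho>2 v" if "v \<in> rays S" for v
  proof -
    have "prime_div \<rho>1 v = divm S m v + prime_div \<rho>2 v" using meq by (rule fun_cong)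
    then show ?thesis using that by (simp add: divm_def)
  qed
  have m1: "m \<rho>1 = 1" using mv[OF r1] ne by (simp add: prime_div_def)
  have m2: "m \<rho>2 = -1" using mv[OF r2] ne by (simp add: prime_div_def)
  have m0: "\<forall>v\<in>rays S. v \<noteq> \<rho>1 \<longrightarrow> v \<noteq> \<rho>2 \<longrightarrow> m v = 0" using mv by (simp add: prime_div_def)
  define d where "d = \<rho>1 - \<rho>2"
  have md: "m d = 2" unfolding d_def using additive_diff[OF madd] m1 m2 by simp
  define s where "s = (\<lambda>x. x - m x *s d)"
  have sadd: "additive_map s" unfolding additive_map_def s_def
    by (simp add: additive_add[OF madd] vec_eq_iff algebra_simps)
  have ms: "m (s x) = - m x" for x
    unfolding s_def using additive_diff[OF madd] additive_mult[OF madd] md by simp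
  have ss: "s (s x) = x" for x
    using ms[of x] unfolding s_def by (simp add: vec_eq_iff algebra_simps)
  have sid: "s \<circ> s = id" using ss by (simp add: fun_eq_iff)
  have sbij: "bij s" by (rule o_bij[OF sid sid])
  have sinv: "hinv s = s" by (rule inv_unique_comp[OF sid sid])
  have s1: "s \<rho>1 = \<rho>2" unfolding s_def d_def using m1 by (simp add: vec_eq_iff)
  have s2: "s \<rho>2 = \<rho>1" unfolding s_def d_def using m2 by (simp add: vec_eq_iff)
  have s0: "s v = v" if "v \<in> rays S" "v \<noteq> \<rho>1" "v \<noteq> \<rho>2" for v
    unfolding s_def using m0 that by (simp add: vec_eq_iff)
  define sw where "sw = (\<lambda>v. if v = \<rho>1 then \<rho>2 else if v = \<rho>2 then \<rho>1 else v)"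
  have ssw: "s v = sw v" if "v \<in> rays S" for v
    unfolding sw_def using s1 s2 s0[OF that] by auto
  have cone_img: "s ` \<kappa> \<in> S" if k: "\<kappa> \<in> S" for \<kappa>
  proof -
    have kr: "\<kappa> \<subseteq> rays S" by (rule cone_rays[OF k])
    have "s ` \<kappa> = sw ` \<kappa>" using ssw kr by (intro image_cong) auto
    moreover have "sw ` \<kappa> \<in> S"
    proof (cases "\<rho>1 \<in> \<kappa> \<and> \<rho>2 \<notin> \<kappa>")
      case True
      have "sw ` \<kappa> = insert \<rho>2 (\<kappa> - {\<rho>1})"
        using True ne unfolding sw_def by (auto intro: rev_image_eqI)
      moreover have "insert \<rho>2 (\<kappa> - {\<rho>1}) \<in> S"
        by (rule facet_swap[OF madd m1 m2 m0 k]) (use True r2 in auto)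
      ultimately show ?thesis by simp
    next
      case F1: False
      show ?thesis
      proof (cases "\<rho>2 \<in> \<kappa> \<and> \<rho>1 \<notin> \<kappa>")
        case True
        have "sw ` \<kappa> = insert \<rho>1 (\<kappa> - {\<rho>2})"
          using True ne unfolding sw_def by (auto intro: rev_image_eqI)
        moreover have "insert \<rho>1 (\<kappa> - {\<rho>2}) \<in> S"
        proof (rule facet_swap[where m = "\<lambda>x. - m x", OF _ _ _ _ k])
          show "additive_map (\<lambda>x. - m x)" using charlat_neg[OF mc] by (simp add: charlat_iff)
          show "- m \<rho>2 = 1" using m2 by simp
          show "- m \<rho>1 = -1" using m1 by simp
          show "\<forall>v\<in>rays S. v \<noteq> \<rho>2 \<longrightarrow> v \<noteq> \<rho>1 \<longrightarrow> - m v = 0" using m0 by simp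
        qed (use True r1 in auto)
        ultimately show ?thesis by simp
      next
        case False
        then have "sw ` \<kappa> = \<kappa>" using F1 ne unfolding sw_def by (auto intro: rev_image_eqI)
        then show ?thesis using k by simp
      qed
    qed
    ultimately show ?thesis by simp
  qed
  have simg: "(\<lambda>\<sigma>. s ` \<sigma>) ` S = S"
  proof
    show "(\<lambda>\<sigma>. s ` \<sigma>) ` S \<subseteq> S" using cone_img by blast
    show "S \<subseteq> (\<lambda>\<sigma>. s ` \<sigma>) ` S"
    proof
      fix \<kappa> assume k: "\<kappa> \<in> S"
      have "\<kappa> = s ` (s ` \<kappa>)" by (simp add: image_comp sid)
      then show "\<kappa> \<in> (\<lambda>\<sigma>. s ` \<sigma>) ` S" using cone_img[OF k] by (rule image_eqI)
    qed
  qed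
  have sA: "s \<in> AutSigma S" unfolding AutSigma_def using sbij sadd simg by simp
  have "picact S s = \<one>\<^bsub>BijGroup (carrier (Pic S))\<^esub>"
    unfolding picact_def
  proof (simp add: BijGroup_def, intro restrict_ext)
    fix C assume C: "C \<in> carrier (Pic S)"
    then obtain D where D: "D \<in> carrier (TDiv S)" "C = cls S D" using Pic_carrier by blast
    define k where "k = D \<rho>2 - D \<rho>1"
    have "act s D = (\<lambda>v. divm S (\<lambda>x. k * m x) v + D v)"
    proof
      fix v
      show "act s D v = divm S (\<lambda>x. k * m x) v + D v"
      proof (cases "v \<in> rays S")
        case True
        then show ?thesis unfolding act_def sinv k_def divm_def using ssw[OF True] m1 m2 m0
          by (auto simp: sw_def)
      next
        case False
        then have "s v \<notin> rays S" using aut_mem_rays[OF sA] by simp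
        then show ?thesis unfolding act_def sinv divm_def using False D(1) by (simp add: TDiv_carrier)
      qed
    qed
    then have "cls S (act s D) = cls S D"
      using cls_eq_iff[OF act_TDiv[OF sA D(1)] D(1)] charlat_smult[OF mc] by blast
    then show "act s ` C = C" using act_cls[OF sA D(1)] D(2) by simp
  qed
  then have "picact S s \<in> J" using subgroup.one_closed[OF Jsub] by simp
  then have "s \<in> W" using sA by (simp add: W_iff)
  then show ?thesis using s1 by blast
qed

end


section \<open>Orbits of rays\<close>

context toricJ
begin

interpretation TD: comm_group "TDiv S" by (rule TDiv_cg)
interpretation PG: comm_group "Pic S" by (rule Pic_cg)

abbreviation "pcl \<rho> \<equiv> cls S (prime_div \<rho>)"

definition Jc :: "(int ^ 'n \<Rightarrow> int) set \<Rightarrow> (int ^ 'n \<Rightarrow> int) set set" where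
  "Jc c = {j c | j. j \<in> J}"

definition Rc :: "(int ^ 'n \<Rightarrow> int) set \<Rightarrow> (int ^ 'n) set" where
  "Rc c = {\<rho> \<in> rays S. pcl \<rho> = c}"

definition ind :: "(int ^ 'n) set \<Rightarrow> int ^ 'n \<Rightarrow> int" where
  "ind A = (\<lambda>v. if v \<in> A then 1 else 0)"

lemma picact_pd: "g \<in> AutSigma S \<Longrightarrow> \<rho> \<in> rays S \<Longrightarrow> picact S g (pcl \<rho>) = pcl (g \<rho>)"
  using picact_cls[OF _ pd_carrier] act_pd[OF aut_bij] by simp

lemma orb_mem: "x \<in> orb \<rho> \<longleftrightarrow> (\<exists>g\<in>W. x = g \<rho>)"
  unfolding orb_def by blast

lemma orb_closed: assumes "h \<in> W" "x \<in> orb \<rho>" shows "h x \<in> orb \<rho>"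
proof -
  obtain g where g: "g \<in> W" "x = g \<rho>" using assms(2) orb_mem by blast
  then have "h x = (h \<circ> g) \<rho>" by simp
  then show ?thesis using W_comp[OF assms(1) g(1)] orb_mem by blast
qed

lemma orb_rays: assumes "\<rho> \<in> rays S" shows "orb \<rho> \<subseteq> rays S"
proof
  fix x assume "x \<in> orb \<rho>"
  then obtain g where g: "g \<in> W" "x = g \<rho>" using orb_mem by blast
  then show "x \<in> rays S" using aut_mem_rays[OF W_aut[OF g(1)]] assms by simp
qed

lemma Jc_sub: assumes "\<rho> \<in> rays S" shows "Jc (pcl \<rho>) \<subseteq> pcl ` rays S"
proof
  fix c assume "c \<in> Jc (pcl \<rho>)"
  then obtain j where j: "j \<in> J" "c = j (pcl \<rho>)" unfolding Jc_def by blast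
  then obtain g where g: "g \<in> W" "j = picact S g" using J_picact by blast
  then have "c = pcl (g \<rho>)" using j picact_pd[OF W_aut[OF g(1)] assms] by simp
  moreover have "g \<rho> \<in> rays S" using aut_mem_rays[OF W_aut[OF g(1)]] assms by simp
  ultimately show "c \<in> pcl ` rays S" by blast
qed

lemma Jc_finite: "\<rho> \<in> rays S \<Longrightarrow> finite (Jc (pcl \<rho>))"
  using Jc_sub finite_rays finite_subset by blast

lemma Jc_carrier: "\<rho> \<in> rays S \<Longrightarrow> Jc (pcl \<rho>) \<subseteq> carrier (Pic S)"
  using Jc_sub cls_carrier[OF pd_carrier] by blast

lemma orb_char: assumes r: "\<rho> \<in> rays S"
  shows "orb \<rho> = {\<rho>' \<in> rays S. pcl \<rho>' \<in> Jc (pcl \<rho>)}"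
proof
  show "orb \<rho> \<subseteq> {\<rho>' \<in> rays S. pcl \<rho>' \<in> Jc (pcl \<rho>)}"
  proof
    fix x assume x: "x \<in> orb \<rho>"
    then obtain g where g: "g \<in> W" "x = g \<rho>" using orb_mem by blast
    have "pcl x = picact S g (pcl \<rho>)" using picact_pd[OF W_aut[OF g(1)] r] g(2) by simp
    moreover have "picact S g \<in> J" using g(1) by (simp add: W_iff)
    ultimately have "pcl x \<in> Jc (pcl \<rho>)" unfolding Jc_def by blast
    then show "x \<in> {\<rho>' \<in> rays S. pcl \<rho>' \<in> Jc (pcl \<rho>)}" using orb_rays[OF r] x by blast
  qed
  show "{\<rho>' \<in> rays S. pcl \<rho>' \<in> Jc (pcl \<rho>)} \<subseteq> orb \<rho>"
  proof
    fix x assume "x \<in> {\<rho>' \<in> rays S. pcl \<rho>' \<in> Jc (pcl \<rho>)}"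
    then have x: "x \<in> rays S" "pcl x \<in> Jc (pcl \<rho>)" by simp_all
    then obtain j where j: "j \<in> J" "pcl x = j (pcl \<rho>)" unfolding Jc_def by blast
    then obtain g where g: "g \<in> W" "j = picact S g" using J_picact by blast
    have gr: "g \<rho> \<in> rays S" using aut_mem_rays[OF W_aut[OF g(1)]] r by simp
    have eq: "pcl x = pcl (g \<rho>)" using j g picact_pd[OF W_aut[OF g(1)] r] by simp
    show "x \<in> orb \<rho>"
    proof (cases "x = g \<rho>")
      case True then show ?thesis using g(1) orb_mem by blast
    next
      case False
      then obtain s where s: "s \<in> W" "s (g \<rho>) = x" using reflection[OF gr x(1) _ eq[symmetric]] by auto
      then have "x = (s \<circ> g) \<rho>" by simp
      then show ?thesis using W_comp[OF s(1) g(1)] orb_mem by blast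
    qed
  qed
qed

lemma Rc_card: assumes r: "\<rho> \<in> rays S" and c: "c' \<in> Jc (pcl \<rho>)"
  shows "mult_cls S c' = mult_cls S (pcl \<rho>)"
proof -
  obtain j where j: "j \<in> J" "c' = j (pcl \<rho>)" using c unfolding Jc_def by blast
  then obtain g where g: "g \<in> W" "j = picact S g" using J_picact by blast
  have ga: "g \<in> AutSigma S" by (rule W_aut[OF g(1)])
  have gi: "hinv g \<in> AutSigma S" by (rule aut_inv[OF ga])
  have pc: "pcl \<rho> \<in> carrier (Pic S)" by (rule cls_carrier[OF pd_carrier[OF r]])
  have "g ` Rc (pcl \<rho>) = Rc c'"
  proof
    show "g ` Rc (pcl \<rho>) \<subseteq> Rc c'"
    proof
      fix y assume "y \<in> g ` Rc (pcl \<rho>)"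
      then obtain x where x: "x \<in> rays S" "pcl x = pcl \<rho>" "y = g x" unfolding Rc_def by blast
      have "pcl y = picact S g (pcl x)" using picact_pd[OF ga x(1)] x(3) by simp
      then have "pcl y = c'" using x(2) j g by simp
      moreover have "y \<in> rays S" using aut_mem_rays[OF ga] x by simp
      ultimately show "y \<in> Rc c'" unfolding Rc_def by simp
    qed
    show "Rc c' \<subseteq> g ` Rc (pcl \<rho>)"
    proof
      fix y assume "y \<in> Rc c'"
      then have y: "y \<in> rays S" "pcl y = c'" unfolding Rc_def by simp_all
      let ?x = "hinv g y"
      have xr: "?x \<in> rays S" using aut_mem_rays[OF gi] y(1) by simp
      have gx: "g ?x = y" by (rule W_app_inv[OF g(1)])
      have "pcl ?x = picact S (hinv g) (pcl y)" using picact_pd[OF gi y(1)] by simp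
      also have "\<dots> = picact S (hinv g) (picact S g (pcl \<rho>))" using y(2) j g by simp
      also have "\<dots> = picact S (hinv g \<circ> g) (pcl \<rho>)" using picact_comp_app[OF gi ga pc] by simp
      also have "\<dots> = pcl \<rho>" using W_inv_inv[OF g(1)] picact_id_app[OF pc] by simp
      finally have "?x \<in> Rc (pcl \<rho>)" using xr unfolding Rc_def by simp
      then show "y \<in> g ` Rc (pcl \<rho>)" using gx by (metis image_eqI)
    qed
  qed
  moreover have "inj_on g (Rc (pcl \<rho>))" by (rule inj_on_subset[OF bij_is_inj[OF aut_bij[OF ga]] subset_UNIV])
  ultimately have "card (Rc c') = card (Rc (pcl \<rho>))" by (metis card_image)
  then show ?thesis unfolding mult_cls_def Rc_def .
qed

lemma ind_TDivInv: assumes r: "\<rho> \<in> rays S" shows "ind (orb \<rho>) \<in> TDivInv S W"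
proof -
  have "ind (orb \<rho>) \<in> carrier (TDiv S)" using orb_rays[OF r] unfolding ind_def TDiv_carrier by auto
  moreover have "\<forall>g\<in>W. act g (ind (orb \<rho>)) = ind (orb \<rho>)"
  proof (intro ballI ext)
    fix g v assume g: "g \<in> W"
    have "hinv g v \<in> orb \<rho> \<longleftrightarrow> v \<in> orb \<rho>"
    proof
      assume "hinv g v \<in> orb \<rho>"
      then have "g (hinv g v) \<in> orb \<rho>" by (rule orb_closed[OF g])
      then show "v \<in> orb \<rho>" using W_app_inv[OF g] by simp
    next
      assume "v \<in> orb \<rho>"
      then show "hinv g v \<in> orb \<rho>" by (rule orb_closed[OF W_inv[OF g]])
    qed
    then show "act g (ind (orb \<rho>)) v = ind (orb \<rho>) v" unfolding act_def ind_def by simp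
  qed
  ultimately show ?thesis by (simp add: TDivInv_iff)
qed

lemma cls_ind: assumes "finite A" "A \<subseteq> rays S"
  shows "cls S (ind A) = finprod (Pic S) pcl A"
  using assms
proof (induction A rule: finite_induct)
  case empty
  then show ?case by (simp add: ind_def Pic_one)
next
  case (insert a A)
  have a: "a \<in> rays S" and A: "A \<subseteq> rays S" using insert.prems by simp_all
  have indA: "ind A \<in> carrier (TDiv S)" using A unfolding ind_def TDiv_carrier by auto
  have "ind (insert a A) = (\<lambda>v. prime_div a v + ind A v)"
    using insert.hyps(2) unfolding ind_def prime_div_def by (auto simp: fun_eq_iff)
  then have "cls S (ind (insert a A)) = pcl a \<otimes>\<^bsub>Pic S\<^esub> cls S (ind A)"
    using cls_mult[OF pd_carrier[OF a] indA] by simp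
  also have "\<dots> = pcl a \<otimes>\<^bsub>Pic S\<^esub> finprod (Pic S) pcl A" using insert.IH[OF A] by simp
  also have "\<dots> = finprod (Pic S) pcl (insert a A)"
  proof -
    have "pcl \<in> A \<rightarrow> carrier (Pic S)" using A cls_carrier[OF pd_carrier] by blast
    then show ?thesis using insert.hyps cls_carrier[OF pd_carrier[OF a]] by (simp add: PG.finprod_insert)
  qed
  finally show ?case .
qed

lemma finprod_pow:
  assumes "finite A" "A \<subseteq> carrier (Pic S)"
  shows "finprod (Pic S) (\<lambda>c. c [^]\<^bsub>Pic S\<^esub> (n::nat)) A = finprod (Pic S) id A [^]\<^bsub>Pic S\<^esub> n"
proof (induction n)
  case 0 then show ?case by simp
next
  case (Suc n)
  have f1: "(\<lambda>c. c [^]\<^bsub>Pic S\<^esub> n) \<in> A \<rightarrow> carrier (Pic S)" using assms(2) by auto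
  have f2: "id \<in> A \<rightarrow> carrier (Pic S)" using assms(2) by auto
  have "finprod (Pic S) (\<lambda>c. c [^]\<^bsub>Pic S\<^esub> Suc n) A = finprod (Pic S) (\<lambda>c. c [^]\<^bsub>Pic S\<^esub> n \<otimes>\<^bsub>Pic S\<^esub> id c) A"
    by (intro PG.finprod_cong') (use assms(2) in auto)
  also have "\<dots> = finprod (Pic S) (\<lambda>c. c [^]\<^bsub>Pic S\<^esub> n) A \<otimes>\<^bsub>Pic S\<^esub> finprod (Pic S) id A"
    by (rule PG.finprod_multf[OF f1 f2])
  also have "\<dots> = finprod (Pic S) id A [^]\<^bsub>Pic S\<^esub> Suc n" by (simp only: Suc.IH nat_pow_Suc)
  finally show ?case .
qed

lemma core: assumes r: "\<rho> \<in> rays S"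
  shows "cls S (ind (orb \<rho>)) = orbit_sum S J (pcl \<rho>) [^]\<^bsub>Pic S\<^esub> mult_cls S (pcl \<rho>)"
proof -
  let ?c = "pcl \<rho>" and ?n = "mult_cls S (pcl \<rho>)"
  have ofin: "finite (orb \<rho>)" using orb_rays[OF r] finite_rays finite_subset by blast
  have ob: "orb \<rho> = \<Union>(Rc ` Jc ?c)" unfolding orb_char[OF r] Rc_def by blast
  have "cls S (ind (orb \<rho>)) = finprod (Pic S) pcl (orb \<rho>)" by (rule cls_ind[OF ofin orb_rays[OF r]])
  also have "finprod (Pic S) pcl (orb \<rho>) = finprod (Pic S) (\<lambda>c'. finprod (Pic S) pcl (Rc c')) (Jc ?c)"
    unfolding ob
  proof (rule PG.finprod_UN_disjoint)
    show "finite (Jc ?c)" by (rule Jc_finite[OF r])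
    show "\<And>i. i \<in> Jc ?c \<Longrightarrow> finite (Rc i)" unfolding Rc_def using finite_rays by simp
    show "pairwise (\<lambda>i j. disjnt (Rc i) (Rc j)) (Jc ?c)" unfolding pairwise_def disjnt_def Rc_def by blast
    show "\<And>i x. i \<in> Jc ?c \<Longrightarrow> x \<in> Rc i \<Longrightarrow> pcl x \<in> carrier (Pic S)"
      unfolding Rc_def using cls_carrier[OF pd_carrier] by blast
  qed
  also have "\<dots> = finprod (Pic S) (\<lambda>c'. c' [^]\<^bsub>Pic S\<^esub> ?n) (Jc ?c)"
  proof (rule PG.finprod_cong')
    show "(\<lambda>c'. c' [^]\<^bsub>Pic S\<^esub> ?n) \<in> Jc ?c \<rightarrow> carrier (Pic S)" using Jc_carrier[OF r] by auto
    fix c' assume c': "c' \<in> Jc ?c"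
    have cc: "c' \<in> carrier (Pic S)" using Jc_carrier[OF r] c' by blast
    have "finprod (Pic S) pcl (Rc c') = finprod (Pic S) (\<lambda>x. c') (Rc c')"
      by (rule PG.finprod_cong') (auto simp: Rc_def cc)
    also have "\<dots> = c' [^]\<^bsub>Pic S\<^esub> card (Rc c')" by (rule PG.finprod_const[OF cc])
    also have "card (Rc c') = ?n" using Rc_card[OF r c'] unfolding mult_cls_def Rc_def by simp
    finally show "finprod (Pic S) pcl (Rc c') = c' [^]\<^bsub>Pic S\<^esub> ?n" .
  qed simp
  also have "\<dots> = finprod (Pic S) id (Jc ?c) [^]\<^bsub>Pic S\<^esub> ?n"
    by (rule finprod_pow[OF Jc_finite[OF r] Jc_carrier[OF r]])
  also have "finprod (Pic S) id (Jc ?c) = orbit_sum S J ?c" unfolding orbit_sum_def Jc_def by simp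
  finally show ?thesis .
qed

end


section \<open>The second isomorphism\<close>

context toricJ
begin

interpretation TD: comm_group "TDiv S" by (rule TDiv_cg)
interpretation PG: comm_group "Pic S" by (rule Pic_cg)

abbreviation "gens \<equiv> {orbit_sum S J c [^]\<^bsub>Pic S\<^esub> mult_cls S c | c. c \<in> ray_classes S}"

lemma ind_gens: assumes r: "\<rho> \<in> rays S" shows "cls S (ind (orb \<rho>)) \<in> gens"
proof -
  have "pcl \<rho> \<in> ray_classes S" unfolding ray_classes_def using r by blast
  then show ?thesis using core[OF r] by blast
qed

lemma gens_Icls: "gens \<subseteq> Icls"
proof
  fix x assume "x \<in> gens"
  then obtain c where c: "c \<in> ray_classes S" "x = orbit_sum S J c [^]\<^bsub>Pic S\<^esub> mult_cls S c" by blast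
  then obtain \<rho> where r: "\<rho> \<in> rays S" "c = pcl \<rho>" unfolding ray_classes_def by blast
  have "x = cls S (ind (orb \<rho>))" using core[OF r(1)] c(2) r(2) by simp
  then show "x \<in> Icls" using ind_TDivInv[OF r(1)] by blast
qed

lemma generate_Icls: "generate (Pic S) gens \<subseteq> Icls"
  by (rule PG.generate_subgroup_incl[OF gens_Icls Icls_subgroup_Pic])

definition mu :: "(int ^ 'n \<Rightarrow> int) \<Rightarrow> nat" where
  "mu E = (\<Sum>v\<in>rays S. nat \<bar>E v\<bar>)"

lemma Icls_generate_aux:
  "\<forall>E. E \<in> TDivInv S W \<longrightarrow> mu E = n \<longrightarrow> cls S E \<in> generate (Pic S) gens"
proof (induction n rule: less_induct)
  case (less n)
  show ?case
  proof (intro allI impI)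
    fix E assume EI: "E \<in> TDivInv S W" and En: "mu E = n"
    have Ec: "E \<in> carrier (TDiv S)" using EI by (simp add: TDivInv_iff)
    show "cls S E \<in> generate (Pic S) gens"
    proof (cases "\<forall>v\<in>rays S. E v = 0")
      case True
      then have "E = (\<lambda>v. 0)" using Ec by (auto simp: TDiv_carrier fun_eq_iff)
      then have "cls S E = \<one>\<^bsub>Pic S\<^esub>" by (simp add: Pic_one)
      then show ?thesis by (simp add: generate.one)
    next
      case False
      then obtain \<rho> where r: "\<rho> \<in> rays S" and Er: "E \<rho> \<noteq> 0" by blast
      let ?O = "orb \<rho>" let ?i = "ind (orb \<rho>)"
      have iI: "?i \<in> TDivInv S W" by (rule ind_TDivInv[OF r])
      have ic: "?i \<in> carrier (TDiv S)" using iI by (simp add: TDivInv_iff)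
      have ig: "cls S ?i \<in> gens" by (rule ind_gens[OF r])
      have Econst: "E v = E \<rho>" if "v \<in> ?O" for v
      proof -
        from that obtain g where g: "g \<in> W" "v = g \<rho>" unfolding orb_def by (rule imageE)
        have ag: "act g E = E" using EI g(1) unfolding TDivInv_iff by blast
        have "act g E v = E (hinv g (g \<rho>))" unfolding act_def g(2) by simp
        also have "hinv g (g \<rho>) = \<rho>" by (rule W_inv_app[OF g(1)])
        finally show ?thesis using ag by simp
      qed
      have rO: "\<rho> \<in> ?O" by (rule orb_self)
      define t :: int where "t = (if E \<rho> > 0 then 1 else -1)"
      define E' where "E' = (\<lambda>v. E v - t * ?i v)"
      have E'I: "E' \<in> TDivInv S W"
        using EI iI unfolding E'_def by (simp add: TDivInv_iff TDiv_carrier act_diff act_smult)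
      have E'c: "E' \<in> carrier (TDiv S)" using E'I by (simp add: TDivInv_iff)
      have mu_lt: "mu E' < mu E"
        unfolding mu_def
      proof (rule sum_strict_mono_ex1[OF finite_rays])
        show "\<forall>v\<in>rays S. nat \<bar>E' v\<bar> \<le> nat \<bar>E v\<bar>"
        proof
          fix v assume "v \<in> rays S"
          show "nat \<bar>E' v\<bar> \<le> nat \<bar>E v\<bar>"
          proof (cases "v \<in> ?O")
            case True
            have "E' v = E \<rho> - t" using Econst[OF True] True unfolding E'_def ind_def by simp
            moreover have "\<bar>E \<rho> - t\<bar> \<le> \<bar>E \<rho>\<bar>" using Er unfolding t_def by (cases "E \<rho> > 0") auto
            ultimately show ?thesis using Econst[OF True] by simp
          next
            case False then show ?thesis unfolding E'_def ind_def by simp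
          qed
        qed
        have "E' \<rho> = E \<rho> - t" using rO unfolding E'_def ind_def by simp
        moreover have "\<bar>E \<rho> - t\<bar> < \<bar>E \<rho>\<bar>" using Er unfolding t_def by (cases "E \<rho> > 0") auto
        ultimately have "nat \<bar>E' \<rho>\<bar> < nat \<bar>E \<rho>\<bar>" by simp
        then show "\<exists>v\<in>rays S. nat \<bar>E' v\<bar> < nat \<bar>E v\<bar>" using r by blast
      qed
      have "\<forall>E. E \<in> TDivInv S W \<longrightarrow> mu E = mu E' \<longrightarrow> cls S E \<in> generate (Pic S) gens"
        using mu_lt En by (intro less.IH) simp
      then have IH: "cls S E' \<in> generate (Pic S) gens" using E'I by simp
      show ?thesis
      proof (cases "E \<rho> > 0")
        case True
        have "E = (\<lambda>v. E' v + ?i v)" unfolding E'_def t_def using True by (simp add: fun_eq_iff)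
        then have "cls S E = cls S E' \<otimes>\<^bsub>Pic S\<^esub> cls S ?i" using cls_mult[OF E'c ic] by simp
        then show ?thesis using generate.eng[OF IH generate.incl[OF ig]] by simp
      next
        case False
        have nic: "(\<lambda>v. - ?i v) \<in> carrier (TDiv S)" using ic by (simp add: TDiv_carrier)
        have "E = (\<lambda>v. E' v + - ?i v)" unfolding E'_def t_def using False by (simp add: fun_eq_iff)
        then have "cls S E = cls S E' \<otimes>\<^bsub>Pic S\<^esub> cls S (\<lambda>v. - ?i v)" using cls_mult[OF E'c nic] by simp
        also have "cls S (\<lambda>v. - ?i v) = inv\<^bsub>Pic S\<^esub> cls S ?i" using cls_inv[OF ic] by simp
        finally show ?thesis using generate.eng[OF IH generate.inv[OF ig]] by simp
      qed
    qed
  qed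
qed

lemma Icls_generate: "Icls \<subseteq> generate (Pic S) gens"
  using Icls_generate_aux by blast

lemma PicT_eq: "PicT S J = Icls"
  unfolding PicT_def using generate_Icls Icls_generate by blast

lemma Coker_AmT: "Coker S J = AmT S J"
  unfolding Coker_def AmT_def PicT_eq ..

end

theorem lemma6p3:
  fixes \<Sigma> :: "(int ^ 'n) set set"
    and J :: "((int ^ 'n \<Rightarrow> int) set \<Rightarrow> (int ^ 'n \<Rightarrow> int) set) set"
  assumes "smooth_projective_toric \<Sigma>"
    and "subgroup J (BijGroup (carrier (Pic \<Sigma>)))"
    and "J \<subseteq> AutP \<Sigma>"
  shows "H1 (Wgrp \<Sigma> J) \<cong> Coker \<Sigma> J \<and> Coker \<Sigma> J \<cong> AmT \<Sigma> J"
proof -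
  interpret T: toricJ \<Sigma> J
    using assms by (simp add: toricJ_def toric_def toricJ_axioms_def)
  show ?thesis using T.first_iso T.Coker_AmT by simp
qed

end
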